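(* Let $(\mathcal{G},\mu)$ be an edge partition and $B\subseteq\mathcal{N}$. For every $\zeta\in\Lambda_\mathcal{G}(B)$, \[\psi^{-1}(\zeta)=\Big\{(\zeta\cap\mathcal{E}^+)\cup E \;:\; E\in\underset{e\in\zeta\cap\mathcal{E}^-}{\odot}\big(\{e\}\cup\mu(e)\big)\Big\}.\]
   Context: $R$ is a partially ordered ring; $\mathcal{G}=(\mathcal{N},\mathcal{E})$ is a multidigraph with source/target maps $s,t$, no self-loops, $\mathcal{N}=\{1,\dots,m+1\}$, labeling $\pi\colon\mathcal{E}\to R$. Trees/forests are subgraphs whose underlying undirected graph is acyclic (connected for trees); a tree is rooted at $N$ if $N$ is its only node without outgoing edges; spanning forests have node set $\mathcal{N}$ and are identified with their edge sets. $\Theta_\mathcal{G}(B)$ is the set of spanning forests with $|B|$ connected components, each a tree rooted at a node of $B$. A cycle is a closed directed path with no repeated nodes. $\mathcal{E}^-=\{e:\pi(e)\in R_{<0}\}$, $\mathcal{E}^+=\{e:\pi(e)\in R_{>0}\}$. An edge partition $(\mathcal{G},\mu)$, $\mu\colon\mathcal{E}^-\to\mathcal{P}(\mathcal{E}^+)$, satisfies (i) $\mathcal{E}=\mathcal{E}^+\sqcup\mathcal{E}^-$; (ii) every cycle contains at most one edge of $\mathcal{E}^-$; (iii) for $e\in\mathcal{E}^-$: (a) $e'\in\mu(e)\Rightarrow s(e')=s(e)$; (b) $e'\in\mu(e)\Rightarrow$ every cycle containing $e'$ contains $t(e)$; (c) $\mu(e)\cap\mu(e')=\emptyset$ for $e\ne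 e'$. $\operatorname{im}\mu=\bigcup_e\mu(e)$, $\mu^*\colon\operatorname{im}\mu\to\mathcal{E}^-$, $\mu^*(e')=e$ if $e'\in\mu(e)$. For $\zeta\in\Theta_\mathcal{G}(B)$, $\mathcal{E}_\zeta=\{E\subseteq\zeta\cap\operatorname{im}\mu:(\zeta\setminus E)\cup\mu^*(E)\in\Theta_\mathcal{G}(B)\}$; this family is closed under union, and $E_\zeta$ denotes its maximum (the union of all its members). $\Lambda_\mathcal{G}(B)=\{\zeta\in\Theta_\mathcal{G}(B):\mathcal{E}_\zeta=\{\emptyset\}\}$ and $\psi\colon\Theta_\mathcal{G}(B)\to\Lambda_\mathcal{G}(B)$, $\psi(\zeta)=(\zeta\setminus E_\zeta)\cup\mu^*(E_\zeta)$. For pairwise disjoint finite sets $F_1,\dots,F_k$, $F_1\odot\cdots\odot F_k=\{\{w_1,\dots,w_k\}: w_j\in F_j\}$. *)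

theory Defs
  imports Main
begin

definition wf_graph :: "nat set \<Rightarrow> 'e set \<Rightarrow> ('e \<Rightarrow> nat) \<Rightarrow> ('e \<Rightarrow> nat) \<Rightarrow> bool" where
  "wf_graph N E s t \<longleftrightarrow> finite N \<and> finite E \<and> (\<forall>e\<in>E. s e \<in> N \<and> t e \<in> N \<and> s e \<noteq> t e)"

definition ucycle :: "'e set \<Rightarrow> ('e \<Rightarrow> nat) \<Rightarrow> ('e \<Rightarrow> nat) \<Rightarrow> 'e list \<Rightarrow> nat list \<Rightarrow> bool" where
  "ucycle F s t es vs \<longleftrightarrow> length es \<ge> 2 \<and> length vs = length es \<and> distinct es \<and> distinct vs
     \<and> set es \<subseteq> F
     \<and> (\<forall>i<length es. {s (es!i), t (es!i)} = {vs!i, vs!((i+1) mod length es)})"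

definition uforest :: "'e set \<Rightarrow> ('e \<Rightarrow> nat) \<Rightarrow> ('e \<Rightarrow> nat) \<Rightarrow> bool" where
  "uforest F s t \<longleftrightarrow> \<not> (\<exists>es vs. ucycle F s t es vs)"

definition uadj :: "'e set \<Rightarrow> ('e \<Rightarrow> nat) \<Rightarrow> ('e \<Rightarrow> nat) \<Rightarrow> (nat \<times> nat) set" where
  "uadj F s t = {(u,v). \<exists>e\<in>F. (s e = u \<and> t e = v) \<or> (s e = v \<and> t e = u)}"

definition components :: "nat set \<Rightarrow> 'e set \<Rightarrow> ('e \<Rightarrow> nat) \<Rightarrow> ('e \<Rightarrow> nat) \<Rightarrow> nat set set" where
  "components N F s t = N // ((uadj F s t)\<^sup>* \<inter> (N \<times> N))"

(* Theta_G(B): spanning forests with |B| components, each a tree rooted at a node of B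
   (the root being the unique node of the component without outgoing edge) *)
definition Theta :: "nat set \<Rightarrow> 'e set \<Rightarrow> ('e \<Rightarrow> nat) \<Rightarrow> ('e \<Rightarrow> nat) \<Rightarrow> nat set \<Rightarrow> 'e set set" where
  "Theta N E s t B = {F. F \<subseteq> E \<and> uforest F s t
      \<and> card (components N F s t) = card B
      \<and> (\<forall>C\<in>components N F s t. \<exists>r\<in>B \<inter> C. \<forall>v\<in>C. (\<not>(\<exists>e\<in>F. s e = v)) \<longleftrightarrow> v = r)}"

definition dcycle :: "'e set \<Rightarrow> ('e \<Rightarrow> nat) \<Rightarrow> ('e \<Rightarrow> nat) \<Rightarrow> 'e list \<Rightarrow> bool" where
  "dcycle E s t es \<longleftrightarrow> es \<noteq> [] \<and> set es \<subseteq> E \<and> distinct (map s es)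
     \<and> (\<forall>i<length es. t (es!i) = s (es!((i+1) mod length es)))"

definition Eminus :: "'e set \<Rightarrow> ('e \<Rightarrow> 'r::ordered_ring) \<Rightarrow> 'e set" where
  "Eminus E \<pi> = {e\<in>E. \<pi> e < 0}"

definition Eplus :: "'e set \<Rightarrow> ('e \<Rightarrow> 'r::ordered_ring) \<Rightarrow> 'e set" where
  "Eplus E \<pi> = {e\<in>E. \<pi> e > 0}"

definition edge_partition ::
  "'e set \<Rightarrow> ('e \<Rightarrow> nat) \<Rightarrow> ('e \<Rightarrow> nat) \<Rightarrow> ('e \<Rightarrow> 'r::ordered_ring) \<Rightarrow> ('e \<Rightarrow> 'e set) \<Rightarrow> bool" where
  "edge_partition E s t \<pi> \<mu> \<longleftrightarrow>
     E = Eplus E \<pi> \<union> Eminus E \<pi> \<and> Eplus E \<pi> \<inter> Eminus E \<pi> = {}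
   \<and> (\<forall>es. dcycle E s t es \<longrightarrow> card (set es \<inter> Eminus E \<pi>) \<le> 1)
   \<and> (\<forall>e\<in>Eminus E \<pi>.
        \<mu> e \<subseteq> Eplus E \<pi>
      \<and> (\<forall>e'\<in>\<mu> e. s e' = s e)
      \<and> (\<forall>e'\<in>\<mu> e. \<forall>es. dcycle E s t es \<and> e' \<in> set es \<longrightarrow> t e \<in> s ` set es)
      \<and> (\<forall>e'\<in>Eminus E \<pi>. e \<noteq> e' \<longrightarrow> \<mu> e \<inter> \<mu> e' = {}))"

definition im_mu :: "'e set \<Rightarrow> ('e \<Rightarrow> 'r::ordered_ring) \<Rightarrow> ('e \<Rightarrow> 'e set) \<Rightarrow> 'e set" where
  "im_mu E \<pi> \<mu> = (\<Union>e\<in>Eminus E \<pi>. \<mu> e)"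

definition mu_star :: "'e set \<Rightarrow> ('e \<Rightarrow> 'r::ordered_ring) \<Rightarrow> ('e \<Rightarrow> 'e set) \<Rightarrow> 'e \<Rightarrow> 'e" where
  "mu_star E \<pi> \<mu> e' = (THE e. e \<in> Eminus E \<pi> \<and> e' \<in> \<mu> e)"

definition Efam :: "nat set \<Rightarrow> 'e set \<Rightarrow> ('e \<Rightarrow> nat) \<Rightarrow> ('e \<Rightarrow> nat) \<Rightarrow> ('e \<Rightarrow> 'r::ordered_ring)
    \<Rightarrow> ('e \<Rightarrow> 'e set) \<Rightarrow> nat set \<Rightarrow> 'e set \<Rightarrow> 'e set set" where
  "Efam N E s t \<pi> \<mu> B \<zeta> = {X. X \<subseteq> \<zeta> \<inter> im_mu E \<pi> \<mu>
       \<and> (\<zeta> - X) \<union> mu_star E \<pi> \<mu> ` X \<in> Theta N E s t B}"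

(* E_\<zeta>: the maximum (union of all members) of the family *)
definition Ezeta :: "nat set \<Rightarrow> 'e set \<Rightarrow> ('e \<Rightarrow> nat) \<Rightarrow> ('e \<Rightarrow> nat) \<Rightarrow> ('e \<Rightarrow> 'r::ordered_ring)
    \<Rightarrow> ('e \<Rightarrow> 'e set) \<Rightarrow> nat set \<Rightarrow> 'e set \<Rightarrow> 'e set" where
  "Ezeta N E s t \<pi> \<mu> B \<zeta> = \<Union> (Efam N E s t \<pi> \<mu> B \<zeta>)"

definition Lambda :: "nat set \<Rightarrow> 'e set \<Rightarrow> ('e \<Rightarrow> nat) \<Rightarrow> ('e \<Rightarrow> nat) \<Rightarrow> ('e \<Rightarrow> 'r::ordered_ring)
    \<Rightarrow> ('e \<Rightarrow> 'e set) \<Rightarrow> nat set \<Rightarrow> 'e set set" where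
  "Lambda N E s t \<pi> \<mu> B = {\<zeta> \<in> Theta N E s t B. Efam N E s t \<pi> \<mu> B \<zeta> = {{}}}"

definition psi :: "nat set \<Rightarrow> 'e set \<Rightarrow> ('e \<Rightarrow> nat) \<Rightarrow> ('e \<Rightarrow> nat) \<Rightarrow> ('e \<Rightarrow> 'r::ordered_ring)
    \<Rightarrow> ('e \<Rightarrow> 'e set) \<Rightarrow> nat set \<Rightarrow> 'e set \<Rightarrow> 'e set" where
  "psi N E s t \<pi> \<mu> B \<zeta> = (\<zeta> - Ezeta N E s t \<pi> \<mu> B \<zeta>) \<union> mu_star E \<pi> \<mu> ` Ezeta N E s t \<pi> \<mu> B \<zeta>"

definition odot :: "'i set \<Rightarrow> ('i \<Rightarrow> 'a set) \<Rightarrow> 'a set set" where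
  "odot I F = {w ` I | w. \<forall>i\<in>I. w i \<in> F i}"

end

theory Submission
  imports Defs
begin

definition ODc :: "nat set \<Rightarrow> 'e set \<Rightarrow> ('e \<Rightarrow> nat) \<Rightarrow> nat set \<Rightarrow> bool" where
  "ODc N F s B \<longleftrightarrow> (\<forall>e\<in>F. s e \<notin> B) \<and> (\<forall>v\<in>N-B. \<exists>e\<in>F. s e = v)
     \<and> (\<forall>e1\<in>F. \<forall>e2\<in>F. s e1 = s e2 \<longrightarrow> e1 = e2)"

definition acyc :: "'e set \<Rightarrow> ('e \<Rightarrow> nat) \<Rightarrow> ('e \<Rightarrow> nat) \<Rightarrow> bool" where
  "acyc F s t \<longleftrightarrow> (\<forall>es. \<not> dcycle F s t es)"

definition good :: "nat set \<Rightarrow> 'e set \<Rightarrow> ('e \<Rightarrow> nat) \<Rightarrow> ('e \<Rightarrow> nat) \<Rightarrow> nat set \<Rightarrow> 'e set \<Rightarrow> bool" where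
  "good N E s t B F \<longleftrightarrow> F \<subseteq> E \<and> ODc N F s B \<and> acyc F s t"

lemma dcycle_mono: "dcycle F s t es \<Longrightarrow> F \<subseteq> G \<Longrightarrow> dcycle G s t es"
  unfolding dcycle_def by blast

lemma closed_cycle:
  assumes fin: "finite V" and ne: "V \<noteq> {}"
    and cl: "\<forall>v\<in>V. \<exists>e\<in>F. s e = v \<and> t e \<in> V"
  shows "\<exists>es. dcycle F s t es"
proof -
  obtain g where g: "\<And>v. v \<in> V \<Longrightarrow> g v \<in> F \<and> s (g v) = v \<and> t (g v) \<in> V"
    using cl by metis
  define q where "q = (\<lambda>v. t (g v))"
  have qV: "v \<in> V \<Longrightarrow> q v \<in> V" for v using g q_def by auto
  obtain x0 where x0: "x0 \<in> V" using ne by blast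
  have itV: "(q ^^ i) x0 \<in> V" for i by (induction i) (auto simp: x0 qV)
  have "\<not> inj (\<lambda>i. (q ^^ i) x0)"
  proof
    assume "inj (\<lambda>i. (q ^^ i) x0)"
    then have "infinite (range (\<lambda>i. (q ^^ i) x0))"
      using finite_imageD by blast
    moreover have "range (\<lambda>i. (q ^^ i) x0) \<subseteq> V" using itV by auto
    ultimately show False using fin finite_subset by blast
  qed
  then obtain i j where ij: "i < j" "(q ^^ i) x0 = (q ^^ j) x0"
    unfolding inj_def by (metis linorder_neqE_nat)
  define y where "y = (q ^^ i) x0"
  have yV: "y \<in> V" using itV y_def by auto
  have itVy: "(q ^^ a) y \<in> V" for a by (induction a) (auto simp: yV qV)
  have "(q ^^ (j - i)) y = y"
    using ij unfolding y_def by (metis funpow_add comp_apply le_add_diff_inverse2 less_imp_le)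
  then have exk: "\<exists>k. 0 < k \<and> (q ^^ k) y = y" using ij by (intro exI[of _ "j - i"]) auto
  define k where "k = (LEAST k. 0 < k \<and> (q ^^ k) y = y)"
  have k: "0 < k" "(q ^^ k) y = y" using LeastI_ex[OF exk] k_def by auto
  have kmin: "\<And>k'. 0 < k' \<Longrightarrow> k' < k \<Longrightarrow> (q ^^ k') y \<noteq> y"
    using k_def not_less_Least by blast
  have dist: "distinct (map (\<lambda>a. (q ^^ a) y) [0..<k])"
  proof (rule ccontr)
    assume "\<not> ?thesis"
    then obtain a b where ab: "a < b" "b < k" "(q ^^ a) y = (q ^^ b) y"
      unfolding distinct_conv_nth by (auto, metis linorder_neqE_nat)
    have "(q ^^ (k - b + a)) y = (q ^^ (k - b)) ((q ^^ a) y)" by (simp add: funpow_add)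
    also have "\<dots> = (q ^^ (k - b)) ((q ^^ b) y)" using ab by simp
    also have "\<dots> = (q ^^ (k - b + b)) y" by (simp add: funpow_add)
    also have "\<dots> = (q ^^ k) y" using ab by simp
    finally have "(q ^^ (k - b + a)) y = y" using k by simp
    moreover have "k - b + a < k" "0 < k - b + a" using ab by auto
    ultimately show False using kmin[of "k - b + a"] by simp
  qed
  define es where "es = map (\<lambda>a. g ((q ^^ a) y)) [0..<k]"
  have len: "length es = k" unfolding es_def by simp
  have nth: "\<And>a. a < k \<Longrightarrow> es ! a = g ((q ^^ a) y)" unfolding es_def by simp
  have gF: "\<And>a. g ((q ^^ a) y) \<in> F" using g itVy by blast
  have gs: "\<And>a. s (g ((q ^^ a) y)) = (q ^^ a) y" using g itVy by blast
  have ms: "map s es = map (\<lambda>a. (q ^^ a) y) [0..<k]"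
    unfolding es_def by (simp add: gs)
  have "dcycle F s t es"
    unfolding dcycle_def
  proof (intro conjI)
    show "es \<noteq> []" using k len by auto
    show "set es \<subseteq> F" unfolding es_def using gF by auto
    show "distinct (map s es)" using ms dist by simp
    show "\<forall>i<length es. t (es ! i) = s (es ! ((i + 1) mod length es))"
    proof (intro allI impI)
      fix i assume i: "i < length es"
      then have ik: "i < k" using len by simp
      have "t (es ! i) = q ((q ^^ i) y)" using ik nth q_def by simp
      also have "\<dots> = (q ^^ Suc i) y" by simp
      finally have 1: "t (es ! i) = (q ^^ Suc i) y" .
      have mk: "(i + 1) mod k < k" using k(1) by simp
      have 2: "s (es ! ((i + 1) mod length es)) = (q ^^ ((i+1) mod k)) y"
        using nth[OF mk] gs len by simp
      have 3: "(q ^^ ((i+1) mod k)) y = (q ^^ Suc i) y"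
      proof (cases "i + 1 = k")
        case True then show ?thesis using k(2) by simp
      next
        case False then show ?thesis using ik by simp
      qed
      show "t (es ! i) = s (es ! ((i + 1) mod length es))" using 1 2 3 by simp
    qed
  qed
  then show ?thesis by blast
qed

definition ed :: "'e set \<Rightarrow> ('e \<Rightarrow> nat) \<Rightarrow> nat \<Rightarrow> 'e" where
  "ed F s v = (SOME e. e \<in> F \<and> s e = v)"
definition par :: "'e set \<Rightarrow> ('e \<Rightarrow> nat) \<Rightarrow> ('e \<Rightarrow> nat) \<Rightarrow> nat \<Rightarrow> nat" where
  "par F s t v = t (ed F s v)"
definition dep :: "'e set \<Rightarrow> ('e \<Rightarrow> nat) \<Rightarrow> ('e \<Rightarrow> nat) \<Rightarrow> nat set \<Rightarrow> nat \<Rightarrow> nat" where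
  "dep F s t B v = (LEAST k. (par F s t ^^ k) v \<in> B)"
definition rt :: "'e set \<Rightarrow> ('e \<Rightarrow> nat) \<Rightarrow> ('e \<Rightarrow> nat) \<Rightarrow> nat set \<Rightarrow> nat \<Rightarrow> nat" where
  "rt F s t B v = (par F s t ^^ dep F s t B v) v"

lemma ed_eq: "ODc N F s B \<Longrightarrow> e \<in> F \<Longrightarrow> ed F s (s e) = e"
  unfolding ed_def ODc_def by (rule some_equality) auto

lemma par_eq: "ODc N F s B \<Longrightarrow> e \<in> F \<Longrightarrow> par F s t (s e) = t e"
  unfolding par_def using ed_eq by metis

lemma wfE: "wf_graph N E s t \<Longrightarrow> e \<in> E \<Longrightarrow> s e \<in> N \<and> t e \<in> N \<and> s e \<noteq> t e"
  unfolding wf_graph_def by blast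

lemma par_N:
  assumes "wf_graph N E s t" "good N E s t B F" "v \<in> N - B"
  shows "par F s t v \<in> N \<and> (\<exists>e\<in>F. s e = v \<and> t e = par F s t v)"
proof -
  obtain e where e: "e \<in> F" "s e = v" using assms unfolding good_def ODc_def by blast
  have "par F s t v = t e" using par_eq e assms unfolding good_def by metis
  moreover have "e \<in> E" using e assms unfolding good_def by blast
  ultimately show ?thesis using wfE[OF assms(1)] e by metis
qed

lemma reach:
  assumes wf: "wf_graph N E s t" and g: "good N E s t B F" and v: "v \<in> N"
  shows "\<exists>k. (par F s t ^^ k) v \<in> B"
proof (rule ccontr)
  assume nv: "\<not> ?thesis"
  define V where "V = {v \<in> N. \<forall>k. (par F s t ^^ k) v \<notin> B}"
  have fin: "finite V" using wf unfolding wf_graph_def V_def by auto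
  have ne: "V \<noteq> {}" using nv v V_def by auto
  have "\<forall>u\<in>V. \<exists>e\<in>F. s e = u \<and> t e \<in> V"
  proof
    fix u assume u: "u \<in> V"
    then have uNB: "u \<in> N - B" unfolding V_def by (auto dest: spec[of _ 0])
    obtain e where e: "e \<in> F" "s e = u" "t e = par F s t u" and pN: "par F s t u \<in> N"
      using par_N[OF wf g uNB] by blast
    have "\<forall>k. (par F s t ^^ k) (par F s t u) \<notin> B"
    proof
      fix k
      have "(par F s t ^^ k) (par F s t u) = (par F s t ^^ Suc k) u"
        by (simp only: funpow_Suc_right comp_apply)
      moreover have "(par F s t ^^ Suc k) u \<notin> B" using u V_def by blast
      ultimately show "(par F s t ^^ k) (par F s t u) \<notin> B" by simp
    qed
    then have "t e \<in> V" using e pN V_def by simp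
    then show "\<exists>e\<in>F. s e = u \<and> t e \<in> V" using e by blast
  qed
  then obtain es where "dcycle F s t es" using closed_cycle[OF fin ne] by blast
  then show False using g unfolding good_def acyc_def by blast
qed

lemma dep_B: "v \<in> B \<Longrightarrow> dep F s t B v = 0"
  unfolding dep_def by (rule Least_equality) auto

lemma rt_B: assumes "v \<in> B" shows "rt F s t B v = v"
  unfolding rt_def using dep_B[OF assms, of F s t] by simp

lemma dep_step:
  assumes wf: "wf_graph N E s t" and g: "good N E s t B F" and v: "v \<in> N - B"
  shows "dep F s t B v = Suc (dep F s t B (par F s t v)) \<and> rt F s t B v = rt F s t B (par F s t v)"
proof -
  let ?p = "par F s t"
  have pN: "?p v \<in> N" using par_N[OF wf g v] by blast
  obtain k where k: "(?p ^^ k) (?p v) \<in> B" using reach[OF wf g pN] by blast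
  define n where "n = dep F s t B (?p v)"
  have n: "(?p ^^ n) (?p v) \<in> B" unfolding n_def dep_def by (rule LeastI[of _ k], rule k)
  have nmin: "\<And>j. (?p ^^ j) (?p v) \<in> B \<Longrightarrow> n \<le> j" unfolding n_def dep_def by (rule Least_le)
  have eq: "\<And>j. (?p ^^ Suc j) v = (?p ^^ j) (?p v)" by (simp only: funpow_Suc_right comp_apply)
  have "dep F s t B v = Suc n"
    unfolding dep_def
  proof (rule Least_equality)
    show "(?p ^^ Suc n) v \<in> B" using n eq by simp
  next
    fix y assume y: "(?p ^^ y) v \<in> B"
    show "Suc n \<le> y"
    proof (cases y)
      case 0 then show ?thesis using y v by simp
    next
      case (Suc j) then show ?thesis using y eq nmin by fastforce
    qed
  qed
  then show ?thesis unfolding rt_def n_def using eq by simp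
qed

lemma rt_props:
  assumes wf: "wf_graph N E s t" and g: "good N E s t B F"
  shows "v \<in> N \<Longrightarrow> rt F s t B v \<in> B \<and> (v, rt F s t B v) \<in> (uadj F s t)\<^sup>*"
proof (induction "dep F s t B v" arbitrary: v)
  case 0
  obtain k where k: "(par F s t ^^ k) v \<in> B" using reach[OF wf g 0(2)] by blast
  have "(par F s t ^^ dep F s t B v) v \<in> B" unfolding dep_def by (rule LeastI[of _ k], rule k)
  then have "v \<in> B" using 0(1) by (metis funpow_0)
  then show ?case using rt_B[of v B F s t] by simp
next
  case (Suc n)
  have vB: "v \<notin> B"
  proof
    assume "v \<in> B"
    then have "dep F s t B v = 0" by (rule dep_B)
    then show False using Suc(2) by simp
  qed
  then have vNB: "v \<in> N - B" using Suc(3) by simp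
  obtain e where e: "e \<in> F" "s e = v" "t e = par F s t v" and pN: "par F s t v \<in> N"
    using par_N[OF wf g vNB] by blast
  have ds: "dep F s t B v = Suc (dep F s t B (par F s t v))" "rt F s t B v = rt F s t B (par F s t v)"
    using dep_step[OF wf g vNB] by auto
  have IH: "rt F s t B (par F s t v) \<in> B \<and> (par F s t v, rt F s t B (par F s t v)) \<in> (uadj F s t)\<^sup>*"
  proof -
    have "n = dep F s t B (par F s t v)" using Suc(2) ds(1) by simp
    then show ?thesis using Suc(1)[of "par F s t v"] pN by blast
  qed
  have "(v, par F s t v) \<in> uadj F s t" unfolding uadj_def using e by blast
  then show ?case using IH ds by (simp add: converse_rtrancl_into_rtrancl)
qed

lemma rt_edge:
  assumes wf: "wf_graph N E s t" and g: "good N E s t B F" and e: "e \<in> F"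
  shows "rt F s t B (s e) = rt F s t B (t e) \<and> s e \<in> N \<and> t e \<in> N"
proof -
  have eE: "e \<in> E" using e g unfolding good_def by blast
  have sNB: "s e \<in> N - B" using wfE[OF wf eE] e g unfolding good_def ODc_def by blast
  have "par F s t (s e) = t e" using par_eq e g unfolding good_def by metis
  then show ?thesis using dep_step[OF wf g sNB] wfE[OF wf eE] by simp
qed

lemma rt_inv:
  assumes wf: "wf_graph N E s t" and g: "good N E s t B F"
    and xy: "(x, y) \<in> (uadj F s t)\<^sup>*" and x: "x \<in> N"
  shows "y \<in> N \<and> rt F s t B x = rt F s t B y"
  using xy
proof (induction rule: rtrancl_induct)
  case base then show ?case using x by simp
next
  case (step y z)
  then obtain e where e: "e \<in> F" "(s e = y \<and> t e = z) \<or> (s e = z \<and> t e = y)"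
    unfolding uadj_def by blast
  then show ?case using rt_edge[OF wf g e(1)] step by auto
qed

lemma dcycle_ucycle:
  assumes wf: "wf_graph N E s t" and FE: "F \<subseteq> E" and d: "dcycle F s t es"
  shows "ucycle F s t es (map s es)"
proof -
  have ne: "es \<noteq> []" and sub: "set es \<subseteq> F" and dist: "distinct (map s es)"
    and nx: "\<forall>i<length es. t (es ! i) = s (es ! ((i + 1) mod length es))"
    using d unfolding dcycle_def by auto
  have "length es \<ge> 2"
  proof (rule ccontr)
    assume "\<not> length es \<ge> 2"
    moreover have "length es \<noteq> 0" using ne by simp
    ultimately have l: "length es = 1" by linarith
    then have "t (es ! 0) = s (es ! 0)" using nx by auto
    moreover have "es ! 0 \<in> E" using sub FE l by (metis in_mono less_one nth_mem)
    ultimately show False using wfE[OF wf] by metis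
  qed
  moreover have "distinct es" using dist distinct_map by blast
  moreover have "\<forall>i<length es. {s (es!i), t (es!i)} = {map s es ! i, map s es ! ((i+1) mod length es)}"
    using nx ne by auto
  ultimately show ?thesis unfolding ucycle_def using sub dist by auto
qed

lemma good_uforest:
  assumes wf: "wf_graph N E s t" and g: "good N E s t B F"
  shows "uforest F s t"
  unfolding uforest_def
proof
  assume "\<exists>es vs. ucycle F s t es vs"
  then obtain es vs where u: "ucycle F s t es vs" by blast
  have len: "length es \<ge> 2" "length vs = length es" and de: "distinct es" and dv: "distinct vs"
    and sub: "set es \<subseteq> F"
    and adj: "\<forall>i<length es. {s (es!i), t (es!i)} = {vs!i, vs!((i+1) mod length es)}"
    using u unfolding ucycle_def by auto
  have st: "\<And>e. e \<in> set es \<Longrightarrow> s e \<in> set vs \<and> t e \<in> set vs"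
  proof -
    fix e assume "e \<in> set es"
    then obtain i where i: "i < length es" "e = es ! i" by (metis in_set_conv_nth)
    have "0 < length es" using len by linarith
    then have "(i+1) mod length es < length vs" using len(2) by simp
    then have "vs!((i+1) mod length es) \<in> set vs" by simp
    moreover have "vs ! i \<in> set vs" using i len by simp
    ultimately show "s e \<in> set vs \<and> t e \<in> set vs" using adj i by (metis insert_iff singletonD insertI1 insertI2)
  qed
  have inj: "inj_on s (set es)" using g sub unfolding good_def ODc_def inj_on_def by blast
  have "card (s ` set es) = card (set vs)"
    using card_image[OF inj] distinct_card[OF de] distinct_card[OF dv] len by simp
  then have eq: "s ` set es = set vs" using st by (intro card_subset_eq) auto
  have cl: "\<forall>v\<in>set vs. \<exists>e\<in>F. s e = v \<and> t e \<in> set vs"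
  proof
    fix v assume "v \<in> set vs"
    then have "v \<in> s ` set es" by (simp only: eq)
    then obtain e where e: "e \<in> set es" "s e = v" by (rule imageE) simp
    then show "\<exists>e\<in>F. s e = v \<and> t e \<in> set vs" using st sub by blast
  qed
  have ne: "set vs \<noteq> {}" using len by auto
  obtain es' where "dcycle F s t es'"
    using closed_cycle[OF List.finite_set ne cl] by blast
  then show False using g unfolding good_def acyc_def by blast
qed

definition Rel :: "nat set \<Rightarrow> 'e set \<Rightarrow> ('e \<Rightarrow> nat) \<Rightarrow> ('e \<Rightarrow> nat) \<Rightarrow> (nat \<times> nat) set" where
  "Rel N F s t = (uadj F s t)\<^sup>* \<inter> N \<times> N"

lemma equiv_Rel: "equiv N (Rel N F s t)"
proof -
  have "sym (uadj F s t)" unfolding uadj_def sym_def by blast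
  then have s: "sym (Rel N F s t)" unfolding Rel_def
    by (intro sym_Int sym_rtrancl) (auto simp: sym_def)
  have tr: "trans (Rel N F s t)" unfolding Rel_def
    by (intro trans_Int trans_rtrancl) (auto simp: trans_def)
  have "refl_on N (Rel N F s t)" unfolding Rel_def refl_on_def by auto
  moreover have "Rel N F s t \<subseteq> N \<times> N" unfolding Rel_def by blast
  ultimately show ?thesis using s tr unfolding equiv_def by blast
qed

lemma good_Theta:
  assumes wf: "wf_graph N E s t" and BN: "B \<subseteq> N" and g: "good N E s t B F"
  shows "F \<in> Theta N E s t B"
proof -
  let ?R = "Rel N F s t"
  let ?rt = "rt F s t B"
  have eqv: "equiv N ?R" by (rule equiv_Rel)
  have comp: "components N F s t = N // ?R" unfolding components_def Rel_def by simp
  have rtR: "\<And>v. v \<in> N \<Longrightarrow> ?rt v \<in> B \<and> (v, ?rt v) \<in> ?R"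
    using rt_props[OF wf g] BN unfolding Rel_def by blast
  have Rrt: "\<And>x y. (x, y) \<in> ?R \<Longrightarrow> ?rt x = ?rt y"
    using rt_inv[OF wf g] unfolding Rel_def by blast
  have cls: "\<And>v. v \<in> N \<Longrightarrow> ?R``{v} = ?R``{?rt v}"
  proof -
    fix v assume "v \<in> N"
    then have "(v, ?rt v) \<in> ?R" using rtR by blast
    then show "?R``{v} = ?R``{?rt v}" using equiv_class_eq_iff[OF eqv] by blast
  qed
  have img: "N // ?R = (\<lambda>b. ?R``{b}) ` B"
  proof
    show "N // ?R \<subseteq> (\<lambda>b. ?R``{b}) ` B"
    proof
      fix C assume "C \<in> N // ?R"
      then obtain v where v: "v \<in> N" "C = ?R``{v}" by (rule quotientE)
      then have "C = ?R``{?rt v}" using cls by simp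
      moreover have "?rt v \<in> B" using rtR v by blast
      ultimately show "C \<in> (\<lambda>b. ?R``{b}) ` B" by (rule rev_image_eqI[rotated])
    qed
    show "(\<lambda>b. ?R``{b}) ` B \<subseteq> N // ?R"
    proof
      fix C assume "C \<in> (\<lambda>b. ?R``{b}) ` B"
      then obtain b where "b \<in> B" "C = ?R``{b}" by (rule imageE) simp
      then show "C \<in> N // ?R" using BN by (simp add: quotientI subset_iff)
    qed
  qed
  have inj: "inj_on (\<lambda>b. ?R``{b}) B"
  proof (rule inj_onI)
    fix b1 b2 assume b: "b1 \<in> B" "b2 \<in> B" "?R``{b1} = ?R``{b2}"
    have "b1 \<in> N" "b2 \<in> N" using b(1,2) BN by auto
    then have "(b1, b2) \<in> ?R" using eq_equiv_class_iff[OF eqv] b(3) by blast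
    then have "?rt b1 = ?rt b2" by (rule Rrt)
    then show "b1 = b2" using rt_B[OF b(1), of F s t] rt_B[OF b(2), of F s t] by simp
  qed
  have card: "card (components N F s t) = card B"
    using comp img card_image[OF inj] by simp
  have roots: "\<forall>C\<in>components N F s t. \<exists>r\<in>B \<inter> C. \<forall>v\<in>C. (\<not>(\<exists>e\<in>F. s e = v)) \<longleftrightarrow> v = r"
  proof
    fix C assume "C \<in> components N F s t"
    then have "C \<in> N // ?R" using comp by simp
    then obtain v where v: "v \<in> N" "C = ?R``{v}" by (rule quotientE)
    have r: "?rt v \<in> B \<inter> C" using rtR v by blast
    have "\<forall>u\<in>C. (\<not>(\<exists>e\<in>F. s e = u)) \<longleftrightarrow> u = ?rt v"
    proof
      fix u assume u: "u \<in> C"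
      then have uv: "(v, u) \<in> ?R" using v by simp
      then have uN: "u \<in> N" unfolding Rel_def by blast
      have ru: "?rt u = ?rt v" using Rrt[OF uv] by simp
      show "(\<not>(\<exists>e\<in>F. s e = u)) \<longleftrightarrow> u = ?rt v"
      proof
        assume "\<not>(\<exists>e\<in>F. s e = u)"
        then have "u \<in> B" using uN g unfolding good_def ODc_def by blast
        then show "u = ?rt v" using ru rt_B[of u B F s t] by simp
      next
        assume "u = ?rt v"
        then have "u \<in> B" using r by simp
        then show "\<not>(\<exists>e\<in>F. s e = u)" using g unfolding good_def ODc_def by blast
      qed
    qed
    then show "\<exists>r\<in>B \<inter> C. \<forall>v\<in>C. (\<not>(\<exists>e\<in>F. s e = v)) \<longleftrightarrow> v = r" using r by blast
  qed
  have "F \<subseteq> E" using g unfolding good_def by blast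
  then show ?thesis unfolding Theta_def using good_uforest[OF wf g] card roots by (intro CollectI conjI)
qed

lemma ThetaD:
  assumes "F \<in> Theta N E s t B"
  shows "F \<subseteq> E" "uforest F s t" "card (components N F s t) = card B"
    "\<forall>C\<in>components N F s t. \<exists>r\<in>B \<inter> C. \<forall>v\<in>C. (\<not>(\<exists>e\<in>F. s e = v)) \<longleftrightarrow> v = r"
  using assms unfolding Theta_def mem_Collect_eq by blast+

lemma Theta_acyc:
  assumes wf: "wf_graph N E s t" and F: "F \<in> Theta N E s t B"
  shows "acyc F s t"
  unfolding acyc_def
proof (intro allI notI)
  fix es assume "dcycle F s t es"
  moreover have "F \<subseteq> E" using ThetaD[OF F] by blast
  ultimately have "ucycle F s t es (map s es)" using dcycle_ucycle[OF wf] by blast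
  then show False using ThetaD(2)[OF F] unfolding uforest_def by blast
qed

lemma Theta_out:
  assumes wf: "wf_graph N E s t" and BN: "B \<subseteq> N" and F: "F \<in> Theta N E s t B"
  shows "(\<forall>e\<in>F. s e \<notin> B) \<and> (\<forall>v\<in>N-B. \<exists>e\<in>F. s e = v)"
proof -
  let ?R = "Rel N F s t"
  let ?C = "components N F s t"
  have eqv: "equiv N ?R" by (rule equiv_Rel)
  have comp: "?C = N // ?R" unfolding components_def Rel_def by simp
  have finN: "finite N" using wf unfolding wf_graph_def by blast
  have finB: "finite B" using finN BN finite_subset by blast
  have cardC: "card ?C = card B" and roots: "\<forall>C\<in>?C. \<exists>r\<in>B \<inter> C. \<forall>v\<in>C. (\<not>(\<exists>e\<in>F. s e = v)) \<longleftrightarrow> v = r"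
    using ThetaD[OF F] by blast+
  define \<rho> where "\<rho> C = (SOME r. r \<in> B \<inter> C \<and> (\<forall>v\<in>C. (\<not>(\<exists>e\<in>F. s e = v)) \<longleftrightarrow> v = r))" for C
  have \<rho>: "\<And>C. C \<in> ?C \<Longrightarrow> \<rho> C \<in> B \<inter> C \<and> (\<forall>v\<in>C. (\<not>(\<exists>e\<in>F. s e = v)) \<longleftrightarrow> v = \<rho> C)"
  proof -
    fix C assume C: "C \<in> ?C"
    from bspec[OF roots C] obtain r where "r \<in> B \<inter> C" "(\<forall>v\<in>C. (\<not>(\<exists>e\<in>F. s e = v)) \<longleftrightarrow> v = r)"
      by (rule bexE)
    then have "r \<in> B \<inter> C \<and> (\<forall>v\<in>C. (\<not>(\<exists>e\<in>F. s e = v)) \<longleftrightarrow> v = r)" by (rule conjI)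
    then show "\<rho> C \<in> B \<inter> C \<and> (\<forall>v\<in>C. (\<not>(\<exists>e\<in>F. s e = v)) \<longleftrightarrow> v = \<rho> C)"
      unfolding \<rho>_def by (rule someI)
  qed
  have inj: "inj_on \<rho> ?C"
  proof (rule inj_onI)
    fix C1 C2 assume C: "C1 \<in> ?C" "C2 \<in> ?C" "\<rho> C1 = \<rho> C2"
    have "\<rho> C1 \<in> C1 \<inter> C2" using \<rho>[OF C(1)] \<rho>[OF C(2)] C(3) by simp
    then have "C1 \<inter> C2 \<noteq> {}" by blast
    moreover have "C1 \<in> N // ?R" "C2 \<in> N // ?R" using C(1,2) comp by simp_all
    ultimately show "C1 = C2" using quotient_disj[OF eqv] by blast
  qed
  have sub: "\<rho> ` ?C \<subseteq> B"
  proof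
    fix x assume "x \<in> \<rho> ` ?C"
    then obtain C where "C \<in> ?C" "x = \<rho> C" by (rule imageE) simp
    then show "x \<in> B" using \<rho> by blast
  qed
  have "card (\<rho> ` ?C) = card B" using card_image[OF inj] cardC by simp
  then have imgB: "\<rho> ` ?C = B" using card_subset_eq[OF finB sub] by simp
  have noout: "\<forall>e\<in>F. s e \<notin> B"
  proof (intro ballI notI)
    fix e assume e: "e \<in> F" "s e \<in> B"
    then have "s e \<in> \<rho> ` ?C" using imgB by simp
    then obtain C where C: "C \<in> ?C" "s e = \<rho> C" by (rule imageE) simp
    have "s e \<in> C" using \<rho>[OF C(1)] C(2) by simp
    then have "\<not>(\<exists>e'\<in>F. s e' = s e)" using \<rho>[OF C(1)] C(2) by blast
    then show False using e by blast
  qed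
  have out: "\<forall>v\<in>N-B. \<exists>e\<in>F. s e = v"
  proof
    fix v assume v: "v \<in> N - B"
    have C: "?R``{v} \<in> ?C" using v comp by (simp add: quotientI)
    have vC: "v \<in> ?R``{v}" using v eqv unfolding equiv_def refl_on_def by blast
    have "\<rho> (?R``{v}) \<in> B" using \<rho>[OF C] by simp
    then have ne: "v \<noteq> \<rho> (?R``{v})" using v by auto
    have h: "(\<not>(\<exists>e\<in>F. s e = v)) \<longleftrightarrow> v = \<rho> (?R``{v})"
      using bspec[OF conjunct2[OF \<rho>[OF C]] vC] .
    show "\<exists>e\<in>F. s e = v" using h ne by simp
  qed
  show ?thesis using noout out by blast
qed

lemma Theta_Bunique:
  assumes wf: "wf_graph N E s t" and BN: "B \<subseteq> N" and F: "F \<in> Theta N E s t B"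
    and b: "b1 \<in> B" "b2 \<in> B" and p: "(b1, b2) \<in> (uadj F s t)\<^sup>*"
  shows "b1 = b2"
proof -
  let ?R = "Rel N F s t"
  have comp: "components N F s t = N // ?R" unfolding components_def Rel_def by simp
  have "b1 \<in> N" using b BN by blast
  then have C: "?R``{b1} \<in> components N F s t" using comp by (simp add: quotientI)
  from bspec[OF ThetaD(4)[OF F] C] obtain r where r: "r \<in> B \<inter> ?R``{b1}" "\<forall>v\<in>?R``{b1}. (\<not>(\<exists>e\<in>F. s e = v)) \<longleftrightarrow> v = r"
    by (rule bexE)
  have in1: "b1 \<in> ?R``{b1}" "b2 \<in> ?R``{b1}" using p b BN unfolding Rel_def by auto
  have no: "\<forall>e\<in>F. s e \<notin> B" using Theta_out[OF wf BN F] by blast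
  have "b1 = r" using bspec[OF r(2) in1(1)] no b(1) by blast
  moreover have "b2 = r" using bspec[OF r(2) in1(2)] no b(2) by blast
  ultimately show ?thesis by simp
qed

definition spath :: "'e set \<Rightarrow> ('e \<Rightarrow> nat) \<Rightarrow> ('e \<Rightarrow> nat) \<Rightarrow> nat list \<Rightarrow> 'e list \<Rightarrow> bool" where
  "spath G s t vs es \<longleftrightarrow> distinct vs \<and> length vs = Suc (length es) \<and> set es \<subseteq> G
     \<and> (\<forall>i<length es. {s (es!i), t (es!i)} = {vs!i, vs!Suc i})"

lemma path_exists:
  assumes "(x, y) \<in> (uadj G s t)\<^sup>*"
  shows "\<exists>vs es. spath G s t vs es \<and> hd vs = x \<and> last vs = y"
  using assms
proof (induction rule: rtrancl_induct)
  case base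
  have "spath G s t [x] []" unfolding spath_def by simp
  then show ?case by fastforce
next
  case (step y z)
  obtain vs es where p: "spath G s t vs es" "hd vs = x" "last vs = y" using step.IH by blast
  obtain e where e: "e \<in> G" "{s e, t e} = {y, z}"
    using step.hyps(2) unfolding uadj_def by blast
  have dv: "distinct vs" and lv: "length vs = Suc (length es)" and se: "set es \<subseteq> G"
    and ad: "\<forall>i<length es. {s (es!i), t (es!i)} = {vs!i, vs!Suc i}"
    using p(1) unfolding spath_def by auto
  show ?case
  proof (cases "z \<in> set vs")
    case True
    then obtain j where j: "j < length vs" "vs ! j = z" by (metis in_set_conv_nth)
    define vs' where "vs' = take (Suc j) vs"
    define es' where "es' = take j es"
    have lvs': "length vs' = Suc j" using j vs'_def by simp
    have les': "length es' = j" using j lv es'_def by simp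
    have "spath G s t vs' es'"
      unfolding spath_def
    proof (intro conjI)
      show "distinct vs'" using dv vs'_def by simp
      show "length vs' = Suc (length es')" using lvs' les' by simp
      show "set es' \<subseteq> G" using se es'_def by (meson order_trans set_take_subset)
      show "\<forall>i<length es'. {s (es' ! i), t (es' ! i)} = {vs' ! i, vs' ! Suc i}"
      proof (intro allI impI)
        fix i assume i: "i < length es'"
        then have "i < j" "i < length es" using les' j lv by auto
        then show "{s (es' ! i), t (es' ! i)} = {vs' ! i, vs' ! Suc i}"
          using ad vs'_def es'_def by simp
      qed
    qed
    moreover have "hd vs' = x" using p(2) vs'_def j by (cases vs) auto
    moreover have "last vs' = z"
    proof -
      have "vs' \<noteq> []" using lvs' by auto
      then have "last vs' = vs' ! j" using lvs' by (simp add: last_conv_nth)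
      also have "\<dots> = vs ! j" unfolding vs'_def by simp
      finally show ?thesis using j by simp
    qed
    ultimately show ?thesis by blast
  next
    case False
    define vs' where "vs' = vs @ [z]"
    define es' where "es' = es @ [e]"
    have ne: "vs \<noteq> []" using lv by auto
    have lastv: "vs ! length es = y" using p(3) lv ne by (simp add: last_conv_nth)
    have "spath G s t vs' es'"
      unfolding spath_def
    proof (intro conjI)
      show "distinct vs'" using dv False vs'_def by simp
      show "length vs' = Suc (length es')" using lv vs'_def es'_def by simp
      show "set es' \<subseteq> G" using se e es'_def by simp
      show "\<forall>i<length es'. {s (es' ! i), t (es' ! i)} = {vs' ! i, vs' ! Suc i}"
      proof (intro allI impI)
        fix i assume i: "i < length es'"
        show "{s (es' ! i), t (es' ! i)} = {vs' ! i, vs' ! Suc i}"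
        proof (cases "i < length es")
          case True
          then show ?thesis using ad lv vs'_def es'_def by (simp add: nth_append)
        next
          case False
          then have "i = length es" using i es'_def by simp
          then show ?thesis using e lastv lv vs'_def es'_def by (simp add: nth_append)
        qed
      qed
    qed
    moreover have "hd vs' = x" using p(2) ne vs'_def by simp
    moreover have "last vs' = z" using vs'_def by simp
    ultimately show ?thesis by blast
  qed
qed

lemma spath_distinct:
  assumes "spath G s t vs es"
  shows "distinct es"
proof -
  have dv: "distinct vs" and lv: "length vs = Suc (length es)"
    and ad: "\<forall>i<length es. {s (es!i), t (es!i)} = {vs!i, vs!Suc i}"
    using assms unfolding spath_def by auto
  show ?thesis
    unfolding distinct_conv_nth
  proof (intro allI impI)
    fix i j assume ij: "i < length es" "j < length es" "i \<noteq> j"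
    show "es ! i \<noteq> es ! j"
    proof
      assume eq: "es ! i = es ! j"
      then have "{vs!i, vs!Suc i} = {vs!j, vs!Suc j}" using ad ij by metis
      moreover have "vs!i \<noteq> vs!j" using dv ij lv by (simp add: nth_eq_iff_index_eq)
      ultimately have "vs!i = vs!Suc j" "vs!j = vs!Suc i" by (metis doubleton_eq_iff)+
      then have "i = Suc j" "j = Suc i" using dv ij lv by (simp_all add: nth_eq_iff_index_eq)
      then show False by simp
    qed
  qed
qed

lemma uadj_mono: "F \<subseteq> G \<Longrightarrow> uadj F s t \<subseteq> uadj G s t"
  unfolding uadj_def by blast

lemma uadj_sym_rtrancl: "(x, y) \<in> (uadj F s t)\<^sup>* \<Longrightarrow> (y, x) \<in> (uadj F s t)\<^sup>*"
proof -
  have "sym (uadj F s t)" unfolding uadj_def sym_def by blast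
  then have "sym ((uadj F s t)\<^sup>*)" by (rule sym_rtrancl)
  then show "(x, y) \<in> (uadj F s t)\<^sup>* \<Longrightarrow> (y, x) \<in> (uadj F s t)\<^sup>*" unfolding sym_def by blast
qed

lemma Theta_unique:
  assumes wf: "wf_graph N E s t" and BN: "B \<subseteq> N" and F: "F \<in> Theta N E s t B"
    and e: "e1 \<in> F" "e2 \<in> F" "s e1 = s e2"
  shows "e1 = e2"
proof (rule ccontr)
  assume ne: "e1 \<noteq> e2"
  define v where "v = s e1"
  have FE: "F \<subseteq> E" using ThetaD(1)[OF F] .
  have out: "\<forall>e\<in>F. s e \<notin> B" "\<forall>u\<in>N-B. \<exists>e\<in>F. s e = u" using Theta_out[OF wf BN F] by blast+
  have ac: "acyc F s t" using Theta_acyc[OF wf F] .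
  have vN: "v \<in> N - B" using wfE[OF wf] FE e(1) out(1) v_def by blast
  define g where "g u = (if u = v then e1 else ed F s u)" for u
  define F0 where "F0 = g ` (N - B)"
  have gF: "\<And>u. u \<in> N - B \<Longrightarrow> g u \<in> F \<and> s (g u) = u"
  proof -
    fix u assume u: "u \<in> N - B"
    show "g u \<in> F \<and> s (g u) = u"
    proof (cases "u = v")
      case True then show ?thesis using e(1) v_def g_def by simp
    next
      case False
      have "\<exists>e. e \<in> F \<and> s e = u" using out(2) u by blast
      then have "ed F s u \<in> F \<and> s (ed F s u) = u" unfolding ed_def by (rule someI_ex)
      then show ?thesis using False g_def by simp
    qed
  qed
  have F0F: "F0 \<subseteq> F"
  proof
    fix x assume "x \<in> F0"
    then obtain u where "u \<in> N - B" "x = g u" unfolding F0_def by (rule imageE) simp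
    then show "x \<in> F" using gF by blast
  qed
  have F0src: "\<And>x. x \<in> F0 \<Longrightarrow> \<exists>u\<in>N-B. x = g u \<and> s x = u"
  proof -
    fix x assume "x \<in> F0"
    then obtain u where "u \<in> N - B" "x = g u" unfolding F0_def by (rule imageE) simp
    then show "\<exists>u\<in>N-B. x = g u \<and> s x = u" using gF by blast
  qed
  have od: "ODc N F0 s B"
    unfolding ODc_def
  proof (intro conjI)
    show "\<forall>e\<in>F0. s e \<notin> B" using F0F out(1) by blast
    show "\<forall>u\<in>N - B. \<exists>e\<in>F0. s e = u"
    proof
      fix u assume u: "u \<in> N - B"
      then have "g u \<in> F0" unfolding F0_def by (rule imageI)
      then show "\<exists>e\<in>F0. s e = u" using gF[OF u] by blast
    qed
    show "\<forall>e1\<in>F0. \<forall>e2\<in>F0. s e1 = s e2 \<longrightarrow> e1 = e2"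
    proof (intro ballI impI)
      fix x y assume xy: "x \<in> F0" "y \<in> F0" "s x = s y"
      obtain u where u: "x = g u" "s x = u" using F0src[OF xy(1)] by blast
      obtain w where w: "y = g w" "s y = w" using F0src[OF xy(2)] by blast
      show "x = y" using u w xy(3) by simp
    qed
  qed
  have ac0: "acyc F0 s t" using ac F0F dcycle_mono unfolding acyc_def by blast
  have g0: "good N E s t B F0" unfolding good_def using F0F FE od ac0 by blast
  have e2n: "e2 \<notin> F0"
  proof
    assume "e2 \<in> F0"
    then obtain u where u: "e2 = g u" "s e2 = u" using F0src by blast
    then have "u = v" using e v_def by simp
    then show False using u ne g_def by simp
  qed
  have e2E: "e2 \<in> E" using e(2) FE by blast
  define b where "b = t e2"
  have bN: "b \<in> N" using wfE[OF wf e2E] b_def by blast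
  have bv: "b \<noteq> v" using wfE[OF wf e2E] b_def v_def e(3) by simp
  let ?rt = "rt F0 s t B"
  have rb: "?rt b \<in> B" "(b, ?rt b) \<in> (uadj F0 s t)\<^sup>*" using rt_props[OF wf g0 bN] by blast+
  have vN': "v \<in> N" using vN by blast
  have rv: "?rt v \<in> B" "(v, ?rt v) \<in> (uadj F0 s t)\<^sup>*" using rt_props[OF wf g0 vN'] by blast+
  have sub: "(uadj F0 s t)\<^sup>* \<subseteq> (uadj F s t)\<^sup>*" using uadj_mono[OF F0F] by (rule rtrancl_mono)
  have "(s e2, t e2) \<in> uadj F s t" unfolding uadj_def using e(2) by blast
  then have vb: "(v, b) \<in> uadj F s t" using e(3) v_def b_def by simp
  have a1: "(v, ?rt v) \<in> (uadj F s t)\<^sup>*" using sub rv(2) by (rule subsetD)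
  have a2: "(?rt v, v) \<in> (uadj F s t)\<^sup>*" using uadj_sym_rtrancl[OF a1] .
  have a3: "(?rt v, b) \<in> (uadj F s t)\<^sup>*" using rtrancl_into_rtrancl[OF a2 vb] .
  have a4: "(b, ?rt b) \<in> (uadj F s t)\<^sup>*" using sub rb(2) by (rule subsetD)
  have "(?rt v, ?rt b) \<in> (uadj F s t)\<^sup>*" using rtrancl_trans[OF a3 a4] .
  then have req: "?rt v = ?rt b" by (rule Theta_Bunique[OF wf BN F rv(1) rb(1)])
  have a5: "(?rt b, v) \<in> (uadj F0 s t)\<^sup>*" using uadj_sym_rtrancl[OF rv(2)] req by simp
  have "(b, v) \<in> (uadj F0 s t)\<^sup>*" using rtrancl_trans[OF rb(2) a5] .
  moreover have "uadj F0 s t \<subseteq> uadj (F - {e2}) s t"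
    using F0F e2n by (intro uadj_mono) blast
  then have "(uadj F0 s t)\<^sup>* \<subseteq> (uadj (F - {e2}) s t)\<^sup>*" by (rule rtrancl_mono)
  ultimately have "(b, v) \<in> (uadj (F - {e2}) s t)\<^sup>*" by (rule subsetD[rotated])
  then obtain vs es where p: "spath (F - {e2}) s t vs es" "hd vs = b" "last vs = v"
    using path_exists by blast
  have dv: "distinct vs" and lv: "length vs = Suc (length es)" and se: "set es \<subseteq> F - {e2}"
    and ad: "\<forall>i<length es. {s (es!i), t (es!i)} = {vs!i, vs!Suc i}"
    using p(1) unfolding spath_def by auto
  have des: "distinct es" using spath_distinct[OF p(1)] .
  have vne: "vs \<noteq> []" using lv by auto
  have vs0: "vs ! 0 = b" using p(2) hd_conv_nth[OF vne] by simp
  have vsl: "vs ! length es = v" using p(3) last_conv_nth[OF vne] lv by simp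
  have l2: "length es \<ge> 1"
  proof (rule ccontr)
    assume "\<not> length es \<ge> 1"
    then have "length es = 0" by arith
    then show False using vs0 vsl bv by simp
  qed
  have "ucycle F s t (es @ [e2]) vs"
    unfolding ucycle_def
  proof (intro conjI)
    show "length (es @ [e2]) \<ge> 2" using l2 by simp
    show "length vs = length (es @ [e2])" using lv by simp
    show "distinct (es @ [e2])" using des se by auto
    show "distinct vs" by (rule dv)
    show "set (es @ [e2]) \<subseteq> F" using se e(2) by auto
    show "\<forall>i<length (es @ [e2]). {s ((es @ [e2]) ! i), t ((es @ [e2]) ! i)} =
          {vs ! i, vs ! ((i + 1) mod length (es @ [e2]))}"
    proof (intro allI impI)
      fix i assume i: "i < length (es @ [e2])"
      show "{s ((es @ [e2]) ! i), t ((es @ [e2]) ! i)} = {vs ! i, vs ! ((i + 1) mod length (es @ [e2]))}"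
      proof (cases "i < length es")
        case True
        then have "(i + 1) mod length (es @ [e2]) = Suc i" by simp
        then show ?thesis using ad True by (simp add: nth_append)
      next
        case False
        then have ii: "i = length es" using i by simp
        then have "(i + 1) mod length (es @ [e2]) = 0" by simp
        then show ?thesis using ii vs0 vsl b_def v_def e(3) by (simp add: nth_append insert_commute)
      qed
    qed
  qed
  then show False using ThetaD(2)[OF F] unfolding uforest_def by blast
qed

lemma Theta_good:
  assumes wf: "wf_graph N E s t" and BN: "B \<subseteq> N" and F: "F \<in> Theta N E s t B"
  shows "good N E s t B F"
  unfolding good_def ODc_def
  using ThetaD(1)[OF F] Theta_out[OF wf BN F] Theta_acyc[OF wf F] Theta_unique[OF wf BN F]
  by blast

lemma Theta_iff:
  assumes wf: "wf_graph N E s t" and BN: "B \<subseteq> N"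
  shows "F \<in> Theta N E s t B \<longleftrightarrow> good N E s t B F"
  using Theta_good[OF wf BN] good_Theta[OF wf BN] by blast

lemma EP:
  assumes "edge_partition E s t \<pi> \<mu>"
  shows "E = Eplus E \<pi> \<union> Eminus E \<pi>" "Eplus E \<pi> \<inter> Eminus E \<pi> = {}"
    "\<And>es. dcycle E s t es \<Longrightarrow> card (set es \<inter> Eminus E \<pi>) \<le> 1"
    "\<And>e. e \<in> Eminus E \<pi> \<Longrightarrow> \<mu> e \<subseteq> Eplus E \<pi>"
    "\<And>e e'. e \<in> Eminus E \<pi> \<Longrightarrow> e' \<in> \<mu> e \<Longrightarrow> s e' = s e"
    "\<And>e e' es. e \<in> Eminus E \<pi> \<Longrightarrow> e' \<in> \<mu> e \<Longrightarrow> dcycle E s t es \<Longrightarrow> e' \<in> set es \<Longrightarrow> t e \<in> s ` set es"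
    "\<And>e e'. e \<in> Eminus E \<pi> \<Longrightarrow> e' \<in> Eminus E \<pi> \<Longrightarrow> e \<noteq> e' \<Longrightarrow> \<mu> e \<inter> \<mu> e' = {}"
proof -
  have h0: "E = Eplus E \<pi> \<union> Eminus E \<pi> \<and> Eplus E \<pi> \<inter> Eminus E \<pi> = {}
   \<and> (\<forall>es. dcycle E s t es \<longrightarrow> card (set es \<inter> Eminus E \<pi>) \<le> 1)
   \<and> (\<forall>e\<in>Eminus E \<pi>.
        \<mu> e \<subseteq> Eplus E \<pi>
      \<and> (\<forall>e'\<in>\<mu> e. s e' = s e)
      \<and> (\<forall>e'\<in>\<mu> e. \<forall>es. dcycle E s t es \<and> e' \<in> set es \<longrightarrow> t e \<in> s ` set es)
      \<and> (\<forall>e'\<in>Eminus E \<pi>. e \<noteq> e' \<longrightarrow> \<mu> e \<inter> \<mu> e' = {}))"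
    using assms unfolding edge_partition_def by assumption
  have h: "E = Eplus E \<pi> \<union> Eminus E \<pi>" "Eplus E \<pi> \<inter> Eminus E \<pi> = {}"
   "(\<forall>es. dcycle E s t es \<longrightarrow> card (set es \<inter> Eminus E \<pi>) \<le> 1)"
   "(\<forall>e\<in>Eminus E \<pi>.
        \<mu> e \<subseteq> Eplus E \<pi>
      \<and> (\<forall>e'\<in>\<mu> e. s e' = s e)
      \<and> (\<forall>e'\<in>\<mu> e. \<forall>es. dcycle E s t es \<and> e' \<in> set es \<longrightarrow> t e \<in> s ` set es)
      \<and> (\<forall>e'\<in>Eminus E \<pi>. e \<noteq> e' \<longrightarrow> \<mu> e \<inter> \<mu> e' = {}))"
    using h0 by blast+
  show "E = Eplus E \<pi> \<union> Eminus E \<pi>" "Eplus E \<pi> \<inter> Eminus E \<pi> = {}" using h(1,2) by simp_all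
  show "\<And>es. dcycle E s t es \<Longrightarrow> card (set es \<inter> Eminus E \<pi>) \<le> 1" using h(3) by simp
  show "\<And>e. e \<in> Eminus E \<pi> \<Longrightarrow> \<mu> e \<subseteq> Eplus E \<pi>" using h(4) by simp
  show "\<And>e e'. e \<in> Eminus E \<pi> \<Longrightarrow> e' \<in> \<mu> e \<Longrightarrow> s e' = s e" using h(4) by simp
  show "\<And>e e' es. e \<in> Eminus E \<pi> \<Longrightarrow> e' \<in> \<mu> e \<Longrightarrow> dcycle E s t es \<Longrightarrow> e' \<in> set es \<Longrightarrow> t e \<in> s ` set es"
    using h(4) by blast
  show "\<And>e e'. e \<in> Eminus E \<pi> \<Longrightarrow> e' \<in> Eminus E \<pi> \<Longrightarrow> e \<noteq> e' \<Longrightarrow> \<mu> e \<inter> \<mu> e' = {}"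
    using h(4) by simp
qed

lemma dcycle_restrict: "dcycle F s t es \<Longrightarrow> set es \<subseteq> G \<Longrightarrow> dcycle G s t es"
  unfolding dcycle_def by blast

lemma Em_E: "Eminus E \<pi> \<subseteq> E" unfolding Eminus_def by blast
lemma Ep_E: "Eplus E \<pi> \<subseteq> E" unfolding Eplus_def by blast

lemma ms_eq:
  assumes ep: "edge_partition E s t \<pi> \<mu>" and e: "e \<in> Eminus E \<pi>" "f \<in> \<mu> e"
  shows "mu_star E \<pi> \<mu> f = e"
  unfolding mu_star_def
proof (rule the_equality)
  show "e \<in> Eminus E \<pi> \<and> f \<in> \<mu> e" using e by blast
  fix e' assume "e' \<in> Eminus E \<pi> \<and> f \<in> \<mu> e'"
  then show "e' = e" using EP(7)[OF ep, of e e'] e by blast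
qed

lemma ms_im:
  assumes ep: "edge_partition E s t \<pi> \<mu>" and f: "f \<in> im_mu E \<pi> \<mu>"
  shows "mu_star E \<pi> \<mu> f \<in> Eminus E \<pi> \<and> f \<in> \<mu> (mu_star E \<pi> \<mu> f)
    \<and> s (mu_star E \<pi> \<mu> f) = s f \<and> f \<in> Eplus E \<pi>"
proof -
  obtain e where e: "e \<in> Eminus E \<pi>" "f \<in> \<mu> e" using f unfolding im_mu_def by blast
  have "mu_star E \<pi> \<mu> f = e" using ms_eq[OF ep e] .
  then show ?thesis using e EP(4)[OF ep e(1)] EP(5)[OF ep e] by auto
qed

lemma imu_Ep: assumes "edge_partition E s t \<pi> \<mu>" shows "im_mu E \<pi> \<mu> \<subseteq> Eplus E \<pi>"
proof
  fix f assume "f \<in> im_mu E \<pi> \<mu>"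
  then show "f \<in> Eplus E \<pi>" using ms_im[OF assms, of f] by blast
qed

definition sw :: "'e set \<Rightarrow> ('e \<Rightarrow> 'r::ordered_ring) \<Rightarrow> ('e \<Rightarrow> 'e set) \<Rightarrow> 'e set \<Rightarrow> 'e set \<Rightarrow> 'e set" where
  "sw E \<pi> \<mu> X F = (F - X) \<union> mu_star E \<pi> \<mu> ` X"

lemma sw_mem: "y \<in> sw E \<pi> \<mu> X F \<longleftrightarrow> (y \<in> F \<and> y \<notin> X) \<or> (\<exists>x\<in>X. y = mu_star E \<pi> \<mu> x)"
  unfolding sw_def by blast

lemma swap_OD:
  assumes ep: "edge_partition E s t \<pi> \<mu>" and g: "good N E s t B F"
    and X: "X \<subseteq> F \<inter> im_mu E \<pi> \<mu>"
  shows "sw E \<pi> \<mu> X F \<subseteq> E \<and> ODc N (sw E \<pi> \<mu> X F) s B"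
proof -
  let ?ms = "mu_star E \<pi> \<mu>"
  let ?F' = "sw E \<pi> \<mu> X F"
  have FE: "F \<subseteq> E" and od: "ODc N F s B" using g unfolding good_def by auto
  have od1: "\<forall>e\<in>F. s e \<notin> B" and od2: "\<forall>v\<in>N-B. \<exists>e\<in>F. s e = v"
    and od3: "\<forall>e1\<in>F. \<forall>e2\<in>F. s e1 = s e2 \<longrightarrow> e1 = e2" using od unfolding ODc_def by auto
  have msX: "\<And>x. x \<in> X \<Longrightarrow> ?ms x \<in> Eminus E \<pi> \<and> s (?ms x) = s x \<and> x \<in> F \<and> x \<in> Eplus E \<pi>"
    using ms_im[OF ep] X by blast
  have src: "\<And>y. y \<in> ?F' \<Longrightarrow> \<exists>x\<in>F. s y = s x \<and> (y \<in> F \<and> y \<notin> X \<and> x = y \<or> x \<in> X \<and> y = ?ms x)"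
  proof -
    fix y assume "y \<in> ?F'"
    then consider "y \<in> F" "y \<notin> X" | x where "x \<in> X" "y = ?ms x" unfolding sw_mem by blast
    then show "\<exists>x\<in>F. s y = s x \<and> (y \<in> F \<and> y \<notin> X \<and> x = y \<or> x \<in> X \<and> y = ?ms x)"
    proof cases
      case 1 then show ?thesis by blast
    next
      case (2 x) then show ?thesis using msX[of x] by auto
    qed
  qed
  have sub: "?F' \<subseteq> E"
  proof
    fix y assume "y \<in> ?F'"
    then consider "y \<in> F" | x where "x \<in> X" "y = ?ms x" unfolding sw_mem by blast
    then show "y \<in> E"
    proof cases
      case 1 then show ?thesis using FE by blast
    next
      case (2 x)
      then have "?ms x \<in> Eminus E \<pi>" using msX[of x] by blast
      then show ?thesis using 2(2) Em_E[of E \<pi>] by blast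
    qed
  qed
  have "ODc N ?F' s B"
    unfolding ODc_def
  proof (intro conjI)
    show "\<forall>e\<in>?F'. s e \<notin> B"
    proof
      fix y assume y: "y \<in> ?F'"
      from src[OF y] obtain x where "x \<in> F" "s y = s x" by blast
      then show "s y \<notin> B" using od1 by simp
    qed
    show "\<forall>v\<in>N - B. \<exists>e\<in>?F'. s e = v"
    proof
      fix v assume "v \<in> N - B"
      then obtain e where e: "e \<in> F" "s e = v" using od2 by blast
      show "\<exists>e\<in>?F'. s e = v"
      proof (cases "e \<in> X")
        case True
        then have "?ms e \<in> ?F'" unfolding sw_mem by (intro disjI2 bexI[of _ e]) simp_all
        moreover have "s (?ms e) = v" using msX[OF True] e(2) by simp
        ultimately show ?thesis by (rule bexI[rotated])
      next
        case False
        then have "e \<in> ?F'" unfolding sw_mem using e(1) by simp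
        then show ?thesis using e(2) by (rule bexI[rotated])
      qed
    qed
    show "\<forall>e1\<in>?F'. \<forall>e2\<in>?F'. s e1 = s e2 \<longrightarrow> e1 = e2"
    proof (intro ballI impI)
      fix y1 y2 assume y: "y1 \<in> ?F'" "y2 \<in> ?F'" "s y1 = s y2"
      obtain x1 where x1: "x1 \<in> F" "s y1 = s x1" "y1 \<in> F \<and> y1 \<notin> X \<and> x1 = y1 \<or> x1 \<in> X \<and> y1 = ?ms x1"
        using src[OF y(1)] by (elim bexE conjE) blast
      obtain x2 where x2: "x2 \<in> F" "s y2 = s x2" "y2 \<in> F \<and> y2 \<notin> X \<and> x2 = y2 \<or> x2 \<in> X \<and> y2 = ?ms x2"
        using src[OF y(2)] by (elim bexE conjE) blast
      have "s x1 = s x2" using x1(2) x2(2) y(3) by simp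
      then have "x1 = x2" using od3 x1(1) x2(1) by blast
      then show "y1 = y2" using x1(3) x2(3) by auto
    qed
  qed
  then show ?thesis using sub by blast
qed

lemma Efam_mem:
  "X \<in> Efam N E s t \<pi> \<mu> B F \<longleftrightarrow> X \<subseteq> F \<inter> im_mu E \<pi> \<mu> \<and> sw E \<pi> \<mu> X F \<in> Theta N E s t B"
  unfolding Efam_def sw_def by blast

lemma Efam_union:
  assumes wf: "wf_graph N E s t" and BN: "B \<subseteq> N" and ep: "edge_partition E s t \<pi> \<mu>"
    and g: "good N E s t B F"
    and X1: "X1 \<in> Efam N E s t \<pi> \<mu> B F" and X2: "X2 \<in> Efam N E s t \<pi> \<mu> B F"
  shows "X1 \<union> X2 \<in> Efam N E s t \<pi> \<mu> B F"
proof -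
  let ?ms = "mu_star E \<pi> \<mu>"
  let ?Em = "Eminus E \<pi>"
  have s1: "X1 \<subseteq> F \<inter> im_mu E \<pi> \<mu>" and T1: "sw E \<pi> \<mu> X1 F \<in> Theta N E s t B"
    using X1 unfolding Efam_mem by auto
  have s2: "X2 \<subseteq> F \<inter> im_mu E \<pi> \<mu>" and T2: "sw E \<pi> \<mu> X2 F \<in> Theta N E s t B"
    using X2 unfolding Efam_mem by auto
  have s12: "X1 \<union> X2 \<subseteq> F \<inter> im_mu E \<pi> \<mu>" using s1 s2 by blast
  have od: "sw E \<pi> \<mu> (X1 \<union> X2) F \<subseteq> E \<and> ODc N (sw E \<pi> \<mu> (X1 \<union> X2) F) s B"
    using swap_OD[OF ep g s12] .
  have a1: "acyc (sw E \<pi> \<mu> X1 F) s t" using Theta_acyc[OF wf T1] .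
  have a2: "acyc (sw E \<pi> \<mu> X2 F) s t" using Theta_acyc[OF wf T2] .
  have od3: "\<forall>e1\<in>F. \<forall>e2\<in>F. s e1 = s e2 \<longrightarrow> e1 = e2" using g unfolding good_def ODc_def by blast
  have msX: "\<And>x. x \<in> X1 \<union> X2 \<Longrightarrow> ?ms x \<in> ?Em \<and> s (?ms x) = s x \<and> x \<in> F"
    using ms_im[OF ep] s12 by blast
  have "acyc (sw E \<pi> \<mu> (X1 \<union> X2) F) s t"
    unfolding acyc_def
  proof (intro allI notI)
    fix es assume d: "dcycle (sw E \<pi> \<mu> (X1 \<union> X2) F) s t es"
    have odE: "sw E \<pi> \<mu> (X1 \<union> X2) F \<subseteq> E" using od by blast
    have dE: "dcycle E s t es" using dcycle_mono[OF d odE] .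
    have setes: "set es \<subseteq> sw E \<pi> \<mu> (X1 \<union> X2) F" using d unfolding dcycle_def by blast
    have "\<not> set es \<subseteq> sw E \<pi> \<mu> X1 F" using a1 dcycle_restrict[OF d] unfolding acyc_def by blast
    then obtain y1 where y1: "y1 \<in> set es" "y1 \<notin> sw E \<pi> \<mu> X1 F" by blast
    have "\<not> set es \<subseteq> sw E \<pi> \<mu> X2 F" using a2 dcycle_restrict[OF d] unfolding acyc_def by blast
    then obtain y2 where y2: "y2 \<in> set es" "y2 \<notin> sw E \<pi> \<mu> X2 F" by blast
    have "y1 \<in> sw E \<pi> \<mu> (X1 \<union> X2) F" using y1 setes by blast
    then obtain f2 where f2: "f2 \<in> X2" "f2 \<notin> X1" "y1 = ?ms f2"
      using y1(2) unfolding sw_mem by blast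
    have "y2 \<in> sw E \<pi> \<mu> (X1 \<union> X2) F" using y2 setes by blast
    then obtain f1 where f1: "f1 \<in> X1" "f1 \<notin> X2" "y2 = ?ms f1"
      using y2(2) unfolding sw_mem by blast
    have "s y1 = s f2" "s y2 = s f1" "f1 \<in> F" "f2 \<in> F" using msX f1 f2 by auto
    moreover have "f1 \<noteq> f2" using f1 f2 by blast
    ultimately have "s y1 \<noteq> s y2" using od3 by metis
    then have "y1 \<noteq> y2" by blast
    moreover have "y1 \<in> ?Em" "y2 \<in> ?Em" using msX f1 f2 by auto
    ultimately have "{y1, y2} \<subseteq> set es \<inter> ?Em" "card {y1, y2} = 2" using y1 y2 by auto
    then have "card (set es \<inter> ?Em) \<ge> 2" by (metis List.finite_set card_mono finite_Int)
    then show False using EP(3)[OF ep dE] by simp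
  qed
  then have "good N E s t B (sw E \<pi> \<mu> (X1 \<union> X2) F)" using od unfolding good_def by blast
  then have "sw E \<pi> \<mu> (X1 \<union> X2) F \<in> Theta N E s t B" using good_Theta[OF wf BN] by blast
  then show ?thesis unfolding Efam_mem using s12 by blast
qed

lemma dir1:
  assumes wf: "wf_graph N E s t" and BN: "B \<subseteq> N" and ep: "edge_partition E s t \<pi> \<mu>"
    and xT: "\<xi> \<in> Theta N E s t B" and ps: "psi N E s t \<pi> \<mu> B \<xi> = \<zeta>"
  shows "\<exists>X. \<xi> = (\<zeta> \<inter> Eplus E \<pi>) \<union> X \<and> X \<in> odot (\<zeta> \<inter> Eminus E \<pi>) (\<lambda>e. insert e (\<mu> e))"
proof -
  let ?ms = "mu_star E \<pi> \<mu>"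
  let ?Ep = "Eplus E \<pi>"
  let ?Em = "Eminus E \<pi>"
  define Z where "Z = Ezeta N E s t \<pi> \<mu> B \<xi>"
  have Zsub: "Z \<subseteq> \<xi> \<inter> im_mu E \<pi> \<mu>" unfolding Z_def Ezeta_def Efam_def by blast
  have zeq: "\<zeta> = (\<xi> - Z) \<union> ?ms ` Z" using ps unfolding psi_def Z_def by simp
  have gx: "good N E s t B \<xi>" using Theta_good[OF wf BN xT] .
  have xE: "\<xi> \<subseteq> E" using gx unfolding good_def by blast
  have u3: "\<And>e1 e2. e1 \<in> \<xi> \<Longrightarrow> e2 \<in> \<xi> \<Longrightarrow> s e1 = s e2 \<Longrightarrow> e1 = e2"
    using gx unfolding good_def ODc_def by blast
  have msZ: "\<And>f. f \<in> Z \<Longrightarrow> ?ms f \<in> ?Em \<and> f \<in> \<mu> (?ms f) \<and> s (?ms f) = s f \<and> f \<in> ?Ep \<and> f \<in> \<xi>"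
  proof -
    fix f assume f: "f \<in> Z"
    then have "f \<in> im_mu E \<pi> \<mu>" "f \<in> \<xi>" using Zsub by auto
    then show "?ms f \<in> ?Em \<and> f \<in> \<mu> (?ms f) \<and> s (?ms f) = s f \<and> f \<in> ?Ep \<and> f \<in> \<xi>"
      using ms_im[OF ep] by blast
  qed
  have EE: "E = ?Ep \<union> ?Em" "?Ep \<inter> ?Em = {}" using EP[OF ep] by auto
  define w where "w e = (if \<exists>f\<in>Z. ?ms f = e then (SOME f. f \<in> Z \<and> ?ms f = e) else e)" for e
  have wZ: "\<And>e. \<exists>f\<in>Z. ?ms f = e \<Longrightarrow> w e \<in> Z \<and> ?ms (w e) = e"
  proof -
    fix e assume h: "\<exists>f\<in>Z. ?ms f = e"
    then have "\<exists>f. f \<in> Z \<and> ?ms f = e" by blast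
    then have "(SOME f. f \<in> Z \<and> ?ms f = e) \<in> Z \<and> ?ms (SOME f. f \<in> Z \<and> ?ms f = e) = e" by (rule someI_ex)
    then show "w e \<in> Z \<and> ?ms (w e) = e" using h w_def by simp
  qed
  have wI: "\<forall>e\<in>\<zeta> \<inter> ?Em. w e \<in> insert e (\<mu> e)"
  proof
    fix e assume e: "e \<in> \<zeta> \<inter> ?Em"
    show "w e \<in> insert e (\<mu> e)"
    proof (cases "\<exists>f\<in>Z. ?ms f = e")
      case True
      then have "w e \<in> Z" "?ms (w e) = e" using wZ by auto
      then show ?thesis using msZ[of "w e"] by simp
    next
      case False then show ?thesis using w_def by simp
    qed
  qed
  have "\<xi> = (\<zeta> \<inter> ?Ep) \<union> w ` (\<zeta> \<inter> ?Em)"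
  proof (rule set_eqI)
    fix x
    show "x \<in> \<xi> \<longleftrightarrow> x \<in> (\<zeta> \<inter> ?Ep) \<union> w ` (\<zeta> \<inter> ?Em)"
    proof
      assume x: "x \<in> \<xi>"
      show "x \<in> (\<zeta> \<inter> ?Ep) \<union> w ` (\<zeta> \<inter> ?Em)"
      proof (cases "x \<in> Z")
        case True
        define e where "e = ?ms x"
        have "e \<in> ?ms ` Z" using True e_def by (rule rev_image_eqI)
        then have e1: "e \<in> \<zeta>" using zeq by simp
        have e2: "e \<in> ?Em" using msZ[OF True] e_def by simp
        have ex: "\<exists>f\<in>Z. ?ms f = e" using True e_def by blast
        have wz: "w e \<in> Z" "?ms (w e) = e" using wZ[OF ex] by auto
        then have "s (w e) = s x" using msZ[of "w e"] msZ[OF True] e_def by simp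
        moreover have "w e \<in> \<xi>" using msZ[OF wz(1)] by simp
        ultimately have "w e = x" using u3 x by blast
        moreover have "e \<in> \<zeta> \<inter> ?Em" using e1 e2 by simp
        ultimately have "x \<in> w ` (\<zeta> \<inter> ?Em)" by (rule image_eqI[OF sym])
        then show ?thesis by (rule UnI2)
      next
        case False
        have "x \<in> (\<xi> - Z) \<union> ?ms ` Z" using x False by simp
        then have xz: "x \<in> \<zeta>" using zeq by simp
        show ?thesis
        proof (cases "x \<in> ?Ep")
          case True then show ?thesis using xz by simp
        next
          case False
          then have xm: "x \<in> ?Em" using x xE EE by blast
          have "\<not> (\<exists>f\<in>Z. ?ms f = x)"
          proof
            assume "\<exists>f\<in>Z. ?ms f = x"
            then obtain f where f: "f \<in> Z" "?ms f = x" by blast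
            then have "s f = s x" "f \<in> \<xi>" using msZ by auto
            then have "f = x" using u3 x by blast
            then show False using f \<open>x \<notin> Z\<close> by simp
          qed
          then have "w x = x" using w_def by simp
          moreover have "x \<in> \<zeta> \<inter> ?Em" using xz xm by simp
          ultimately have "x \<in> w ` (\<zeta> \<inter> ?Em)" by (rule image_eqI[OF sym])
          then show ?thesis by (rule UnI2)
        qed
      qed
    next
      assume x: "x \<in> (\<zeta> \<inter> ?Ep) \<union> w ` (\<zeta> \<inter> ?Em)"
      show "x \<in> \<xi>"
      proof (cases "x \<in> \<zeta> \<inter> ?Ep")
        case True
        have "x \<notin> ?ms ` Z"
        proof
          assume "x \<in> ?ms ` Z"
          then obtain f where "f \<in> Z" "x = ?ms f" by (rule imageE) simp
          then have "x \<in> ?Em" using msZ by simp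
          then show False using True EE by blast
        qed
        moreover have "x \<in> (\<xi> - Z) \<union> ?ms ` Z" using True zeq by simp
        ultimately show ?thesis by simp
      next
        case False
        then have "x \<in> w ` (\<zeta> \<inter> ?Em)" using x by (elim UnE) blast+
        then obtain e where e: "e \<in> \<zeta> \<inter> ?Em" "x = w e" by (rule imageE) simp
        show ?thesis
        proof (cases "\<exists>f\<in>Z. ?ms f = e")
          case True
          then have "w e \<in> Z" using wZ by blast
          then show ?thesis using msZ e(2) by simp
        next
          case False
          then have "w e = e" using w_def by simp
          moreover have "e \<notin> ?ms ` Z"
          proof
            assume "e \<in> ?ms ` Z"
            then obtain f where "f \<in> Z" "e = ?ms f" by (rule imageE) simp
            then show False using False by blast
          qed
          moreover have "e \<in> (\<xi> - Z) \<union> ?ms ` Z" using e(1) zeq by simp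
          ultimately show ?thesis using e(2) by simp
        qed
      qed
    qed
  qed
  moreover have "w ` (\<zeta> \<inter> ?Em) \<in> odot (\<zeta> \<inter> ?Em) (\<lambda>e. insert e (\<mu> e))"
    unfolding odot_def mem_Collect_eq using wI by (intro exI[of _ w] conjI refl)
  ultimately show ?thesis by blast
qed

lemma dir2:
  assumes wf: "wf_graph N E s t" and BN: "B \<subseteq> N" and ep: "edge_partition E s t \<pi> \<mu>"
    and zL: "\<zeta> \<in> Lambda N E s t \<pi> \<mu> B"
    and wI: "\<forall>e\<in>\<zeta> \<inter> Eminus E \<pi>. w e \<in> insert e (\<mu> e)"
    and xi: "\<xi> = (\<zeta> \<inter> Eplus E \<pi>) \<union> w ` (\<zeta> \<inter> Eminus E \<pi>)"
  shows "\<xi> \<in> Theta N E s t B \<and> psi N E s t \<pi> \<mu> B \<xi> = \<zeta>"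
proof -
  let ?ms = "mu_star E \<pi> \<mu>"
  let ?Ep = "Eplus E \<pi>"
  let ?Em = "Eminus E \<pi>"
  have zT: "\<zeta> \<in> Theta N E s t B" and zE: "Efam N E s t \<pi> \<mu> B \<zeta> = {{}}"
    using zL unfolding Lambda_def by auto
  have gz: "good N E s t B \<zeta>" using Theta_good[OF wf BN zT] .
  have zE': "\<zeta> \<subseteq> E" using gz unfolding good_def by blast
  have odz: "ODc N \<zeta> s B" using gz unfolding good_def by blast
  have z1: "\<forall>e\<in>\<zeta>. s e \<notin> B" and z2: "\<forall>v\<in>N-B. \<exists>e\<in>\<zeta>. s e = v"
    and z3: "\<And>e1 e2. e1 \<in> \<zeta> \<Longrightarrow> e2 \<in> \<zeta> \<Longrightarrow> s e1 = s e2 \<Longrightarrow> e1 = e2"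
    using odz unfolding ODc_def by blast+
  have EE: "E = ?Ep \<union> ?Em" "?Ep \<inter> ?Em = {}" using EP[OF ep] by auto
  define W where "W e = (if e \<in> ?Em then w e else e)" for e
  have Wp: "\<And>e. e \<in> \<zeta> \<Longrightarrow> W e \<in> E \<and> s (W e) = s e \<and> (W e \<noteq> e \<longrightarrow> e \<in> ?Em \<and> W e \<in> \<mu> e)"
  proof -
    fix e assume e: "e \<in> \<zeta>"
    show "W e \<in> E \<and> s (W e) = s e \<and> (W e \<noteq> e \<longrightarrow> e \<in> ?Em \<and> W e \<in> \<mu> e)"
    proof (cases "e \<in> ?Em \<and> w e \<noteq> e")
      case True
      then have "w e \<in> \<mu> e" using wI e by blast
      moreover have "\<mu> e \<subseteq> ?Ep" using EP(4)[OF ep] True by blast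
      ultimately have "w e \<in> E" "s (w e) = s e" using Ep_E[of E \<pi>] EP(5)[OF ep] True by blast+
      then show ?thesis using W_def True \<open>w e \<in> \<mu> e\<close> by simp
    next
      case False
      then have "W e = e" using W_def by auto
      then show ?thesis using e zE' by auto
    qed
  qed
  have Wz: "\<And>e. e \<in> \<zeta> \<Longrightarrow> W e \<in> \<zeta> \<Longrightarrow> W e = e"
    using Wp z3 by metis
  have xiW: "\<xi> = W ` \<zeta>"
  proof (rule set_eqI)
    fix x
    show "x \<in> \<xi> \<longleftrightarrow> x \<in> W ` \<zeta>"
    proof
      assume "x \<in> \<xi>"
      then consider "x \<in> \<zeta> \<inter> ?Ep" | "x \<in> w ` (\<zeta> \<inter> ?Em)" using xi by blast
      then show "x \<in> W ` \<zeta>"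
      proof cases
        case 1
        then have "W x = x" using W_def EE by auto
        then show ?thesis using 1 by (metis IntD1 image_eqI)
      next
        case 2
        then obtain e where e: "e \<in> \<zeta> \<inter> ?Em" "x = w e" by (rule imageE) simp
        then have "x = W e" using W_def by simp
        then show ?thesis using e(1) by (intro image_eqI) auto
      qed
    next
      assume "x \<in> W ` \<zeta>"
      then obtain e where e: "e \<in> \<zeta>" "x = W e" by (rule imageE) simp
      show "x \<in> \<xi>"
      proof (cases "e \<in> ?Em")
        case True
        then have "x = w e" using e W_def by simp
        moreover have "e \<in> \<zeta> \<inter> ?Em" using e True by simp
        ultimately have "x \<in> w ` (\<zeta> \<inter> ?Em)" by (rule image_eqI)
        then show ?thesis using xi by simp
      next
        case False
        then have "x = e" "e \<in> ?Ep" using e W_def zE' EE by auto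
        then show ?thesis using xi e by simp
      qed
    qed
  qed
  have xsrc: "\<And>x. x \<in> \<xi> \<Longrightarrow> \<exists>e\<in>\<zeta>. x = W e"
  proof -
    fix x assume "x \<in> \<xi>"
    then have "x \<in> W ` \<zeta>" using xiW by simp
    then obtain e where "e \<in> \<zeta>" "x = W e" by (rule imageE) simp
    then show "\<exists>e\<in>\<zeta>. x = W e" by blast
  qed
  have Win: "\<And>e. e \<in> \<zeta> \<Longrightarrow> W e \<in> \<xi>" using xiW by simp
  have Rel: "\<And>x. x \<in> \<xi> \<Longrightarrow> x \<notin> \<zeta> \<Longrightarrow> \<exists>e. e \<in> \<zeta> \<and> e \<in> ?Em \<and> x \<in> \<mu> e \<and> x = W e \<and> ?ms x = e \<and> s x = s e"
  proof -
    fix x assume x: "x \<in> \<xi>" "x \<notin> \<zeta>"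
    obtain e where e: "e \<in> \<zeta>" "x = W e" using xsrc[OF x(1)] by blast
    then have "W e \<noteq> e" using x(2) by auto
    then have h: "e \<in> ?Em" "W e \<in> \<mu> e" "s (W e) = s e" using Wp[OF e(1)] by auto
    then have "?ms x = e" using ms_eq[OF ep h(1)] e(2) by simp
    then show "\<exists>e. e \<in> \<zeta> \<and> e \<in> ?Em \<and> x \<in> \<mu> e \<and> x = W e \<and> ?ms x = e \<and> s x = s e"
      using e h by (intro exI[of _ e]) auto
  qed
  have Rel2: "\<And>y. y \<in> \<zeta> \<Longrightarrow> y \<notin> \<xi> \<Longrightarrow> W y \<in> \<xi> \<and> W y \<notin> \<zeta> \<and> ?ms (W y) = y \<and> y \<in> ?Em"
  proof -
    fix y assume y: "y \<in> \<zeta>" "y \<notin> \<xi>"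
    have wx: "W y \<in> \<xi>" using Win[OF y(1)] .
    then have ne: "W y \<noteq> y" using y(2) by auto
    then have nz: "W y \<notin> \<zeta>" using Wz y(1) by blast
    have h: "y \<in> ?Em" "W y \<in> \<mu> y" using Wp[OF y(1)] ne by auto
    then show "W y \<in> \<xi> \<and> W y \<notin> \<zeta> \<and> ?ms (W y) = y \<and> y \<in> ?Em"
      using wx nz ms_eq[OF ep h(1) h(2)] by simp
  qed
  have xE: "\<xi> \<subseteq> E"
  proof
    fix x assume "x \<in> \<xi>"
    then obtain e where "e \<in> \<zeta>" "x = W e" using xsrc by blast
    then show "x \<in> E" using Wp by blast
  qed
  have odx: "ODc N \<xi> s B"
    unfolding ODc_def
  proof (intro conjI)
    show "\<forall>e\<in>\<xi>. s e \<notin> B"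
    proof
      fix x assume "x \<in> \<xi>"
      then obtain e where e: "e \<in> \<zeta>" "x = W e" using xsrc by blast
      then have "s x = s e" using Wp by blast
      then show "s x \<notin> B" using z1 e(1) by simp
    qed
    show "\<forall>v\<in>N - B. \<exists>e\<in>\<xi>. s e = v"
    proof
      fix v assume "v \<in> N - B"
      then obtain e where e: "e \<in> \<zeta>" "s e = v" using z2 by blast
      then have "W e \<in> \<xi>" "s (W e) = v" using Win Wp by auto
      then show "\<exists>e\<in>\<xi>. s e = v" by blast
    qed
    show "\<forall>e1\<in>\<xi>. \<forall>e2\<in>\<xi>. s e1 = s e2 \<longrightarrow> e1 = e2"
    proof (intro ballI impI)
      fix x1 x2 assume x: "x1 \<in> \<xi>" "x2 \<in> \<xi>" "s x1 = s x2"
      obtain e1 where e1: "e1 \<in> \<zeta>" "x1 = W e1" using xsrc[OF x(1)] by blast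
      obtain e2 where e2: "e2 \<in> \<zeta>" "x2 = W e2" using xsrc[OF x(2)] by blast
      have "s e1 = s e2" using Wp[OF e1(1)] Wp[OF e2(1)] e1(2) e2(2) x(3) by simp
      then have "e1 = e2" using z3 e1(1) e2(1) by blast
      then show "x1 = x2" using e1(2) e2(2) by simp
    qed
  qed
  have acx: "acyc \<xi> s t"
    unfolding acyc_def
  proof (intro allI notI)
    fix es assume d: "dcycle \<xi> s t es"
    define n where "n = length es"
    have ne: "es \<noteq> []" and setx: "set es \<subseteq> \<xi>"
      and nx: "\<forall>i<n. t (es ! i) = s (es ! ((i + 1) mod n))"
      using d unfolding dcycle_def n_def by auto
    have n0: "0 < n" using ne n_def by simp
    have dE: "dcycle E s t es" using dcycle_mono[OF d xE] .
    let ?pz = "par \<zeta> s t"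
    let ?dz = "dep \<zeta> s t B"
    have "\<not> set es \<subseteq> \<zeta>"
    proof
      assume "set es \<subseteq> \<zeta>"
      then have "dcycle \<zeta> s t es" by (rule dcycle_restrict[OF d])
      then show False using gz unfolding good_def acyc_def by blast
    qed
    then obtain xa where xa: "xa \<in> set es" "xa \<notin> \<zeta>" by blast
    obtain x0 where x0: "x0 \<in> set es \<and> x0 \<notin> \<zeta>"
      and x0min: "\<And>y. y \<in> set es \<and> y \<notin> \<zeta> \<Longrightarrow> ?dz (s x0) \<le> ?dz (s y)"
      using ex_has_least_nat[of "\<lambda>x. x \<in> set es \<and> x \<notin> \<zeta>" xa "\<lambda>x. ?dz (s x)"] xa by blast
    have x0x: "x0 \<in> \<xi>" using x0 setx by blast
    obtain e0 where e0: "e0 \<in> \<zeta>" "e0 \<in> ?Em" "x0 \<in> \<mu> e0" "s x0 = s e0"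
      using Rel[OF x0x] x0 by blast
    have "t e0 \<in> s ` set es" using EP(6)[OF ep e0(2) e0(3) dE] x0 by blast
    then obtain y0 where y0: "y0 \<in> set es" "t e0 = s y0" by (rule imageE) simp
    then obtain j where j: "j < n" "s (es ! j) = t e0" using n_def by (metis in_set_conv_nth)
    obtain i0 where i0: "i0 < n" "es ! i0 = x0" using x0 n_def by (metis in_set_conv_nth)
    have pe0: "?pz (s e0) = t e0" using par_eq[OF odz e0(1)] .
    have se0: "s e0 \<in> N - B" using z1 e0(1) wfE[OF wf] zE' by blast
    have de0: "?dz (s e0) = Suc (?dz (t e0))" using dep_step[OF wf gz se0] pe0 by simp
    define idx where "idx k = (j + k) mod n" for k
    have idxn: "\<And>k. idx k < n" using n0 idx_def by simp
    have idxS: "\<And>k. (idx k + 1) mod n = idx (Suc k)" unfolding idx_def by (simp add: mod_Suc_eq)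
    define P where "P k = (es ! idx k \<notin> \<zeta>)" for k
    have "idx (n - j + i0) = i0" unfolding idx_def using j(1) i0(1) by simp
    then have Pk0: "P (n - j + i0)" using i0 x0 P_def by simp
    define k where "k = (LEAST k. P k)"
    have Pk: "P k" using Pk0 k_def by (metis LeastI)
    have kmin: "\<And>k'. k' < k \<Longrightarrow> \<not> P k'" using k_def not_less_Least by blast
    have claim: "\<And>k'. k' \<le> k \<Longrightarrow> ?dz (t e0) = ?dz (s (es ! idx k')) + k'"
    proof -
      fix k' assume "k' \<le> k"
      then show "?dz (t e0) = ?dz (s (es ! idx k')) + k'"
      proof (induction k')
        case 0
        have "idx 0 = j" unfolding idx_def using j(1) by simp
        then show ?case using j(2) by simp
      next
        case (Suc k')
        then have IH: "?dz (t e0) = ?dz (s (es ! idx k')) + k'" by simp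
        have "k' < k" using Suc.prems by simp
        then have yz: "es ! idx k' \<in> \<zeta>" using kmin P_def by blast
        have "t (es ! idx k') = s (es ! ((idx k' + 1) mod n))" using nx idxn by blast
        then have tn: "t (es ! idx k') = s (es ! idx (Suc k'))" using idxS by simp
        have pz: "?pz (s (es ! idx k')) = t (es ! idx k')" using par_eq[OF odz yz] .
        have sN: "s (es ! idx k') \<in> N - B" using z1 yz wfE[OF wf] zE' by blast
        have "?dz (s (es ! idx k')) = Suc (?dz (?pz (s (es ! idx k'))))"
          using dep_step[OF wf gz sN] by simp
        then show ?case using IH pz tn by simp
      qed
    qed
    have "idx k < length es" using idxn n_def by simp
    then have x1: "es ! idx k \<in> set es" "es ! idx k \<notin> \<zeta>" using Pk P_def by auto
    have "?dz (t e0) = ?dz (s (es ! idx k)) + k" using claim by simp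
    then have "?dz (s (es ! idx k)) < ?dz (s x0)" using de0 e0(4) by simp
    moreover have "?dz (s x0) \<le> ?dz (s (es ! idx k))" using x0min x1 by blast
    ultimately show False by simp
  qed
  have gx: "good N E s t B \<xi>" unfolding good_def using xE odx acx by blast
  have xT: "\<xi> \<in> Theta N E s t B" using good_Theta[OF wf BN gx] .
  define R where "R = \<xi> - \<zeta>"
  have Rsub: "R \<subseteq> \<xi> \<inter> im_mu E \<pi> \<mu>"
  proof
    fix x assume "x \<in> R"
    then have x: "x \<in> \<xi>" "x \<notin> \<zeta>" using R_def by auto
    obtain e where "e \<in> ?Em" "x \<in> \<mu> e" using Rel[OF x] by blast
    then have "x \<in> im_mu E \<pi> \<mu>" unfolding im_mu_def by blast
    then show "x \<in> \<xi> \<inter> im_mu E \<pi> \<mu>" using x by blast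
  qed
  have swR: "sw E \<pi> \<mu> R \<xi> = \<zeta>"
  proof (rule set_eqI)
    fix y
    show "y \<in> sw E \<pi> \<mu> R \<xi> \<longleftrightarrow> y \<in> \<zeta>"
    proof
      assume "y \<in> sw E \<pi> \<mu> R \<xi>"
      then consider "y \<in> \<xi>" "y \<notin> R" | x where "x \<in> R" "y = ?ms x" unfolding sw_mem by blast
      then show "y \<in> \<zeta>"
      proof cases
        case 1 then show ?thesis using R_def by blast
      next
        case (2 x)
        then have "x \<in> \<xi>" "x \<notin> \<zeta>" using R_def by auto
        then obtain e where "e \<in> \<zeta>" "?ms x = e" using Rel by blast
        then show ?thesis using 2 by simp
      qed
    next
      assume y: "y \<in> \<zeta>"
      show "y \<in> sw E \<pi> \<mu> R \<xi>"
      proof (cases "y \<in> \<xi>")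
        case True
        then show ?thesis unfolding sw_mem R_def using y by blast
      next
        case False
        then have h: "W y \<in> \<xi>" "W y \<notin> \<zeta>" "?ms (W y) = y" using Rel2[OF y] by auto
        then have "W y \<in> R" using R_def by blast
        then show ?thesis unfolding sw_mem using h(3) by (intro disjI2 bexI[of _ "W y"]) simp_all
      qed
    qed
  qed
  have REf: "R \<in> Efam N E s t \<pi> \<mu> B \<xi>" unfolding Efam_mem using Rsub swR zT by simp
  have sub: "\<And>X. X \<in> Efam N E s t \<pi> \<mu> B \<xi> \<Longrightarrow> X \<subseteq> R"
  proof -
    fix X assume X: "X \<in> Efam N E s t \<pi> \<mu> B \<xi>"
    have XR: "X \<union> R \<in> Efam N E s t \<pi> \<mu> B \<xi>" using Efam_union[OF wf BN ep gx X REf] .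
    have Xs: "X \<subseteq> \<xi> \<inter> im_mu E \<pi> \<mu>" using X unfolding Efam_mem by blast
    define Y where "Y = X - R"
    have Ys: "Y \<subseteq> \<zeta> \<inter> im_mu E \<pi> \<mu>" using Xs unfolding Y_def R_def by blast
    have YEp: "Y \<subseteq> ?Ep" using Ys imu_Ep[OF ep] by blast
    have eq: "sw E \<pi> \<mu> Y \<zeta> = sw E \<pi> \<mu> (X \<union> R) \<xi>"
    proof (rule set_eqI)
      fix y
      show "y \<in> sw E \<pi> \<mu> Y \<zeta> \<longleftrightarrow> y \<in> sw E \<pi> \<mu> (X \<union> R) \<xi>"
      proof
        assume "y \<in> sw E \<pi> \<mu> Y \<zeta>"
        then consider "y \<in> \<zeta>" "y \<notin> Y" | x where "x \<in> Y" "y = ?ms x" unfolding sw_mem by blast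
        then show "y \<in> sw E \<pi> \<mu> (X \<union> R) \<xi>"
        proof cases
          case 1
          show ?thesis
          proof (cases "y \<in> \<xi>")
            case True
            then have "y \<notin> X \<union> R" using 1 unfolding Y_def R_def by blast
            then show ?thesis unfolding sw_mem using True by blast
          next
            case False
            then have h: "W y \<in> \<xi>" "W y \<notin> \<zeta>" "?ms (W y) = y" using Rel2[OF 1(1)] by auto
            then have "W y \<in> X \<union> R" using R_def by blast
            then show ?thesis unfolding sw_mem using h(3) by (intro disjI2 bexI[of _ "W y"]) simp_all
          qed
        next
          case (2 x)
          then have "x \<in> X \<union> R" using Y_def by blast
          then show ?thesis unfolding sw_mem using 2(2) by (intro disjI2 bexI[of _ x]) simp_all
        qed
      next
        assume "y \<in> sw E \<pi> \<mu> (X \<union> R) \<xi>"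
        then consider "y \<in> \<xi>" "y \<notin> X \<union> R" | x where "x \<in> X \<union> R" "y = ?ms x" unfolding sw_mem by blast
        then show "y \<in> sw E \<pi> \<mu> Y \<zeta>"
        proof cases
          case 1
          then have "y \<in> \<zeta>" "y \<notin> Y" unfolding Y_def R_def by auto
          then show ?thesis unfolding sw_mem by blast
        next
          case (2 x)
          show ?thesis
          proof (cases "x \<in> Y")
            case True
            then show ?thesis unfolding sw_mem using 2(2) by (intro disjI2 bexI[of _ x]) simp_all
          next
            case False
            then have "x \<in> R" using 2(1) Y_def by blast
            then have "x \<in> \<xi>" "x \<notin> \<zeta>" using R_def by auto
            then obtain e where e: "e \<in> \<zeta>" "e \<in> ?Em" "?ms x = e" using Rel by blast
            then have "y \<in> \<zeta>" using 2(2) by simp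
            moreover have "y \<notin> Y" using e 2(2) YEp EE by blast
            ultimately show ?thesis unfolding sw_mem by blast
          qed
        qed
      qed
    qed
    have "sw E \<pi> \<mu> (X \<union> R) \<xi> \<in> Theta N E s t B" using XR unfolding Efam_mem by blast
    then have "Y \<in> Efam N E s t \<pi> \<mu> B \<zeta>" unfolding Efam_mem using Ys eq by simp
    then have "Y = {}" using zE by simp
    then show "X \<subseteq> R" unfolding Y_def by blast
  qed
  have "Ezeta N E s t \<pi> \<mu> B \<xi> = R"
    unfolding Ezeta_def using sub REf by blast
  then have "psi N E s t \<pi> \<mu> B \<xi> = sw E \<pi> \<mu> R \<xi>" unfolding psi_def sw_def by simp
  then show ?thesis using swR xT by simp
qed

theorem lemma3p5:
  fixes m :: nat and E :: "'e set" and s t :: "'e \<Rightarrow> nat"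
    and \<pi> :: "'e \<Rightarrow> 'r::ordered_ring" and \<mu> :: "'e \<Rightarrow> 'e set" and B :: "nat set"
  assumes "wf_graph {1..m+1} E s t"
    and "edge_partition E s t \<pi> \<mu>"
    and "B \<subseteq> {1..m+1}"
    and "\<zeta> \<in> Lambda {1..m+1} E s t \<pi> \<mu> B"
  shows "{\<xi> \<in> Theta {1..m+1} E s t B. psi {1..m+1} E s t \<pi> \<mu> B \<xi> = \<zeta>}
       = {(\<zeta> \<inter> Eplus E \<pi>) \<union> X | X. X \<in> odot (\<zeta> \<inter> Eminus E \<pi>) (\<lambda>e. insert e (\<mu> e))}"
proof (rule set_eqI)
  fix \<xi>
  show "\<xi> \<in> {\<xi> \<in> Theta {1..m+1} E s t B. psi {1..m+1} E s t \<pi> \<mu> B \<xi> = \<zeta>}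
     \<longleftrightarrow> \<xi> \<in> {(\<zeta> \<inter> Eplus E \<pi>) \<union> X | X. X \<in> odot (\<zeta> \<inter> Eminus E \<pi>) (\<lambda>e. insert e (\<mu> e))}"
  proof
    assume "\<xi> \<in> {\<xi> \<in> Theta {1..m+1} E s t B. psi {1..m+1} E s t \<pi> \<mu> B \<xi> = \<zeta>}"
    then have h: "\<xi> \<in> Theta {1..m+1} E s t B" "psi {1..m+1} E s t \<pi> \<mu> B \<xi> = \<zeta>" by auto
    obtain X where "\<xi> = (\<zeta> \<inter> Eplus E \<pi>) \<union> X" "X \<in> odot (\<zeta> \<inter> Eminus E \<pi>) (\<lambda>e. insert e (\<mu> e))"
      using dir1[OF assms(1) assms(3) assms(2) h] by blast
    then show "\<xi> \<in> {(\<zeta> \<inter> Eplus E \<pi>) \<union> X | X. X \<in> odot (\<zeta> \<inter> Eminus E \<pi>) (\<lambda>e. insert e (\<mu> e))}"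
      by blast
  next
    assume "\<xi> \<in> {(\<zeta> \<inter> Eplus E \<pi>) \<union> X | X. X \<in> odot (\<zeta> \<inter> Eminus E \<pi>) (\<lambda>e. insert e (\<mu> e))}"
    then obtain X where X: "\<xi> = (\<zeta> \<inter> Eplus E \<pi>) \<union> X" "X \<in> odot (\<zeta> \<inter> Eminus E \<pi>) (\<lambda>e. insert e (\<mu> e))"
      by blast
    then obtain w where w: "X = w ` (\<zeta> \<inter> Eminus E \<pi>)" "\<forall>e\<in>\<zeta> \<inter> Eminus E \<pi>. w e \<in> insert e (\<mu> e)"
      unfolding odot_def by blast
    have "\<xi> = (\<zeta> \<inter> Eplus E \<pi>) \<union> w ` (\<zeta> \<inter> Eminus E \<pi>)" using X(1) w(1) by simp
    then have "\<xi> \<in> Theta {1..m+1} E s t B \<and> psi {1..m+1} E s t \<pi> \<mu> B \<xi> = \<zeta>"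
      using dir2[OF assms(1) assms(3) assms(2) assms(4) w(2)] by blast
    then show "\<xi> \<in> {\<xi> \<in> Theta {1..m+1} E s t B. psi {1..m+1} E s t \<pi> \<mu> B \<xi> = \<zeta>}" by simp
  qed
qed

end
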